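(* Let $\{S^n\}_{n\in\mathbb{N}}$ be an exponentially regular, exponentially nearly additive $\mathbb{R}^h$-valued process with $\sup_{n\in\mathbb{N}}|\Lambda^n|^{-1}\log\mathbb{E}[\exp(\langle\lambda,S^n\rangle)]<\infty$ for all $\lambda\in\mathbb{R}^h$. Then $\{S^n/|\Lambda^n|\}_{n\in\mathbb{N}}$ is exponentially tight with speed $|\Lambda^n|$, and for every $f\in\mathscr{F}(\mathbb{R}^h)$ the limit $\lim_{n\to\infty}|\Lambda^n|^{-1}\Gamma_n(f)$ exists in $[-\infty,\infty)$.
   Context: Fix $d,h\in\mathbb{N}$, $|\Lambda^n|=(2n)^d$. Exponential near additivity and exponential regularity are as follows. Exponentially $r$-nearly additive: there exist $\{S^{n,z}\}_{n\in\mathbb{N},z\in\mathbb{Z}^d}$, with $\{S^{n,z}\}_z$ independent copies of $S^n$ for each $n$, such that for all $\varepsilon,C>0$ there is an integer $K>r$ with $P(\|S^{(2m+1)k}-\sum_{z\in\mathbb{Z}^d\cap[-m,m]^d}S^{k-r,z}\|>\varepsilon|\Lambda^{(2m+1)k}|)\le e^{-C|\Lambda^{(2m+1)k}|}$ for all $k\ge K$, $m\in\mathbb{N}$; exponentially nearly additive = this for some integer $r\ge0$. Exponentially regular: for each $k$, with $(2m_n+1)k\le n<(2m_n+3)k$, for all $\varepsilon,C>0$ there is $N$ with $P(\|S^n-S^{(2m_n+1)k}\|>\varepsilon|\Lambda^n|)\le e^{-C|\Lambda^n|}$ for $n\ge N$. Exponentially tight with speed $|\Lambda^n|$: for every $\alpha>0$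 there is a compact $K\subset\mathbb{R}^h$ with $\limsup_n|\Lambda^n|^{-1}\log P(S^n/|\Lambda^n|\notin K)\le-\alpha$. $\Gamma_n(f)=\log\mathbb{E}[\exp(|\Lambda^n|f(S^n/|\Lambda^n|))]\in(-\infty,\infty]$. $\mathscr{F}(\mathbb{R}^h)$ is the class of Lipschitz continuous concave real functions on $\mathbb{R}^h$. *)

theory Defs
  imports "HOL-Probability.Probability"
begin

text \<open>Volume of the box Lambda^n in dimension d: |Lambda^n| = (2n)^d.\<close>
definition lam :: "nat \<Rightarrow> nat \<Rightarrow> real" where
  "lam d n = real ((2 * n) ^ d)"

definition lnE :: "real \<Rightarrow> ereal" where
  "lnE p = (if p \<le> 0 then -\<infinity> else ereal (ln p))"

definition lnEnn :: "ennreal \<Rightarrow> ereal" where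
  "lnEnn x = (if x = \<top> then \<infinity> else lnE (enn2real x))"

definition Gamma :: "'a measure \<Rightarrow> nat \<Rightarrow> (nat \<Rightarrow> 'a \<Rightarrow> 'v::real_normed_vector)
     \<Rightarrow> nat \<Rightarrow> ('v \<Rightarrow> real) \<Rightarrow> ereal" where
  "Gamma M d S n f =
     lnEnn (\<integral>\<^sup>+ \<omega>. ennreal (exp (lam d n * f (scaleR (1 / lam d n) (S n \<omega>)))) \<partial>M)"

text \<open>Box [-m,m]^d intersected with Z^d, with Z^d modelled as 'd => int.\<close>
definition box_pts :: "nat \<Rightarrow> ('d::finite \<Rightarrow> int) set" where
  "box_pts m = {z. \<forall>i. \<bar>z i\<bar> \<le> int m}"

definition exp_nearly_additive ::
  "'a measure \<Rightarrow> (nat \<Rightarrow> 'a \<Rightarrow> 'v::euclidean_space) \<Rightarrow> 'd::finite itself \<Rightarrow> bool" where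
  "exp_nearly_additive M S (_::'d itself) \<longleftrightarrow>
     (\<exists>r::nat. \<exists>S' :: nat \<Rightarrow> ('d \<Rightarrow> int) \<Rightarrow> 'a \<Rightarrow> 'v.
        (\<forall>n. prob_space.indep_vars M (\<lambda>_. borel) (S' n) UNIV \<and>
             (\<forall>z. distr M borel (S' n z) = distr M borel (S n))) \<and>
        (\<forall>\<epsilon>>0. \<forall>C>0. \<exists>K::nat. K > r \<and> (\<forall>k\<ge>K. \<forall>m\<ge>1.
           measure M {\<omega>\<in>space M.
              norm (S ((2*m+1)*k) \<omega> - (\<Sum>z\<in>box_pts m. S' (k - r) z \<omega>))
                > \<epsilon> * lam CARD('d) ((2*m+1)*k)}
            \<le> exp (- C * lam CARD('d) ((2*m+1)*k)))))"

definition exp_regular ::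
  "'a measure \<Rightarrow> (nat \<Rightarrow> 'a \<Rightarrow> 'v::euclidean_space) \<Rightarrow> nat \<Rightarrow> bool" where
  "exp_regular M S d \<longleftrightarrow>
     (\<forall>k\<ge>1. \<forall>\<epsilon>>0. \<forall>C>0. \<exists>N. \<forall>n\<ge>N. \<forall>m::nat.
        (2*m+1)*k \<le> n \<and> n < (2*m+3)*k \<longrightarrow>
        measure M {\<omega>\<in>space M. norm (S n \<omega> - S ((2*m+1)*k) \<omega>) > \<epsilon> * lam d n}
          \<le> exp (- C * lam d n))"

definition exp_tight ::
  "'a measure \<Rightarrow> (nat \<Rightarrow> 'a \<Rightarrow> 'v::euclidean_space) \<Rightarrow> nat \<Rightarrow> bool" where
  "exp_tight M S d \<longleftrightarrow>
     (\<forall>\<alpha>>0. \<exists>K. compact K \<and>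
        limsup (\<lambda>n. lnE (measure M {\<omega>\<in>space M. scaleR (1 / lam d n) (S n \<omega>) \<notin> K})
                    / ereal (lam d n)) \<le> - ereal \<alpha>)"

end

theory Submission
  imports Defs
begin


lemma lam_ge1: "n \<ge> 1 \<Longrightarrow> lam d n \<ge> 1"
proof -
  assume "n \<ge> 1"
  then have "(1::nat) \<le> (2*n)^d" by (simp add: one_le_power)
  then show ?thesis unfolding lam_def by linarith
qed

lemma lam_pos: "n \<ge> 1 \<Longrightarrow> lam d n > 0"
  using lam_ge1[of n d] by linarith

lemma norm_exp_bound:
  fixes x :: "'v::euclidean_space" and c :: real
  assumes "c \<ge> 0"
  shows "exp (c * norm x) \<le> (\<Sum>b\<in>Basis. exp ((c * DIM('v)) * (x \<bullet> b)) + exp (-(c * DIM('v)) * (x \<bullet> b)))"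
proof -
  obtain b0 where b0: "b0 \<in> Basis" "\<And>b. b \<in> Basis \<Longrightarrow> \<bar>x \<bullet> b\<bar> \<le> \<bar>x \<bullet> b0\<bar>"
  proof -
    have "Max ((\<lambda>b. \<bar>x \<bullet> b\<bar>) ` Basis) \<in> (\<lambda>b. \<bar>x \<bullet> b\<bar>) ` Basis"
      by (rule Max_in) auto
    then obtain b0 where b0: "b0 \<in> Basis" "Max ((\<lambda>b. \<bar>x \<bullet> b\<bar>) ` Basis) = \<bar>x \<bullet> b0\<bar>" by (metis (no_types, lifting) imageE)
    have "\<bar>x \<bullet> b\<bar> \<le> \<bar>x \<bullet> b0\<bar>" if "b \<in> Basis" for b
      using that b0(2)[symmetric] by (simp add: Max_ge)
    then show ?thesis using that b0(1) by blast
  qed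
  have "norm x \<le> (\<Sum>b\<in>Basis. \<bar>x \<bullet> b\<bar>)" by (rule norm_le_l1)
  also have "\<dots> \<le> (\<Sum>b\<in>(Basis::'v set). \<bar>x \<bullet> b0\<bar>)" by (rule sum_mono) (use b0 in auto)
  also have "\<dots> = DIM('v) * \<bar>x \<bullet> b0\<bar>" by simp
  finally have "c * norm x \<le> c * (DIM('v) * \<bar>x \<bullet> b0\<bar>)" using assms by (intro mult_left_mono) auto
  then have "exp (c * norm x) \<le> exp (c * (DIM('v) * \<bar>x \<bullet> b0\<bar>))" by simp
  also have "\<dots> \<le> exp ((c * DIM('v)) * (x \<bullet> b0)) + exp (-(c * DIM('v)) * (x \<bullet> b0))"
    by (cases "x \<bullet> b0 \<ge> 0") (auto simp: abs_if algebra_simps add_increasing add_increasing2)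
  also have "\<dots> \<le> (\<Sum>b\<in>Basis. exp ((c * DIM('v)) * (x \<bullet> b)) + exp (-(c * DIM('v)) * (x \<bullet> b)))"
    using b0(1) by (intro member_le_sum) auto
  finally show ?thesis .
qed

locale expmom = prob_space M for M :: "'a measure" +
  fixes S :: "nat \<Rightarrow> 'a \<Rightarrow> 'v::euclidean_space" and d :: nat
  assumes meas[measurable]: "\<And>n. S n \<in> borel_measurable M"
  and mom: "\<And>l. \<exists>B::real. \<forall>n\<ge>1.
            lnEnn (\<integral>\<^sup>+ \<omega>. ennreal (exp (l \<bullet> S n \<omega>)) \<partial>M) / ereal (lam d n) \<le> ereal B"
begin

lemma mom_real: "\<exists>B::real. \<forall>n\<ge>1. (\<integral>\<^sup>+ \<omega>. ennreal (exp (l \<bullet> S n \<omega>)) \<partial>M) \<le> ennreal (exp (B * lam d n))"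
proof -
  obtain B where B: "\<And>n. n \<ge> 1 \<Longrightarrow> lnEnn (\<integral>\<^sup>+ \<omega>. ennreal (exp (l \<bullet> S n \<omega>)) \<partial>M) / ereal (lam d n) \<le> ereal B"
    using mom[of l] by blast
  have "(\<integral>\<^sup>+ \<omega>. ennreal (exp (l \<bullet> S n \<omega>)) \<partial>M) \<le> ennreal (exp (B * lam d n))" if n: "n \<ge> 1" for n
  proof -
    define I where "I = (\<integral>\<^sup>+ \<omega>. ennreal (exp (l \<bullet> S n \<omega>)) \<partial>M)"
    have lp: "lam d n > 0" using lam_pos n by blast
    have hB: "lnEnn I / ereal (lam d n) \<le> ereal B" using B[OF n] by (simp add: I_def)
    show ?thesis
    proof (cases "I = \<top>")
      case True
      then show ?thesis using hB lp by (simp add: lnEnn_def)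
    next
      case False
      then have Ie: "I = ennreal (enn2real I)" by (simp add: less_top)
      show ?thesis
      proof (cases "enn2real I \<le> 0")
        case True
        then have "I = 0" using Ie by (metis ennreal_eq_0_iff) 
        then show ?thesis by (simp add: I_def)
      next
        case False2: False
        then have "ln (enn2real I) / lam d n \<le> B" using hB \<open>I \<noteq> \<top>\<close> lp
          by (simp add: lnEnn_def lnE_def)
        then have "ln (enn2real I) \<le> B * lam d n" using lp by (simp add: divide_le_eq)
        then have "enn2real I \<le> exp (B * lam d n)" using False2
          by (metis exp_le_cancel_iff exp_ln not_le)
        then show ?thesis using Ie by (metis I_def ennreal_leI)
      qed
    qed
  qed
  then show ?thesis by blast
qed

lemma normmom:
  assumes c: "c \<ge> 0"
  shows "\<exists>B\<ge>0. \<forall>n\<ge>1. (\<integral>\<^sup>+ \<omega>. ennreal (exp (c * norm (S n \<omega>))) \<partial>M) \<le> ennreal (exp (B * lam d n))"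
proof -
  have "\<forall>l. \<exists>B::real. \<forall>n\<ge>1. (\<integral>\<^sup>+ \<omega>. ennreal (exp (l \<bullet> S n \<omega>)) \<partial>M) \<le> ennreal (exp (B * lam d n))"
    using mom_real by blast
  then obtain Bf where Bf: "\<And>l n. n \<ge> 1 \<Longrightarrow> (\<integral>\<^sup>+ \<omega>. ennreal (exp (l \<bullet> S n \<omega>)) \<partial>M) \<le> ennreal (exp (Bf l * lam d n))"
    by metis
  define h where "h = real DIM('v)"
  have h1: "h \<ge> 1" unfolding h_def by (simp add: DIM_positive Suc_leI)
  define B0 where "B0 = (\<Sum>b\<in>(Basis::'v set). \<bar>Bf ((c*h) *\<^sub>R b)\<bar> + \<bar>Bf (-(c*h) *\<^sub>R b)\<bar>)"
  have B0ge: "Bf (s *\<^sub>R b) \<le> B0" if "b \<in> Basis" "s = c*h \<or> s = -(c*h)" for b s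
  proof -
    have "Bf (s *\<^sub>R b) \<le> \<bar>Bf ((c*h) *\<^sub>R b)\<bar> + \<bar>Bf (-(c*h) *\<^sub>R b)\<bar>" using that(2) by auto
    also have "\<dots> \<le> B0" unfolding B0_def using that(1) by (intro member_le_sum) auto
    finally show ?thesis .
  qed
  have B0nn: "B0 \<ge> 0" unfolding B0_def by (intro sum_nonneg) auto
  define B where "B = B0 + ln (2*h)"
  have lnh: "ln (2*h) \<ge> 0" using h1 by simp
  have "(\<integral>\<^sup>+ \<omega>. ennreal (exp (c * norm (S n \<omega>))) \<partial>M) \<le> ennreal (exp (B * lam d n))" if n: "n \<ge> 1" for n
  proof -
    have lam1: "lam d n \<ge> 1" using lam_ge1 n by blast
    have "(\<integral>\<^sup>+ \<omega>. ennreal (exp (c * norm (S n \<omega>))) \<partial>M) \<le>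
      (\<integral>\<^sup>+ \<omega>. (\<Sum>b\<in>Basis. ennreal (exp (((c * h) *\<^sub>R b) \<bullet> S n \<omega>)) + ennreal (exp ((-(c * h) *\<^sub>R b) \<bullet> S n \<omega>))) \<partial>M)"
    proof (rule nn_integral_mono)
      fix \<omega>
      have "exp (c * norm (S n \<omega>)) \<le> (\<Sum>b\<in>Basis. exp ((c * DIM('v)) * (S n \<omega> \<bullet> b)) + exp (-(c * DIM('v)) * (S n \<omega> \<bullet> b)))"
        by (rule norm_exp_bound[OF c])
      also have "\<dots> = (\<Sum>b\<in>Basis. exp (((c * h) *\<^sub>R b) \<bullet> S n \<omega>) + exp ((-(c * h) *\<^sub>R b) \<bullet> S n \<omega>))"
        unfolding h_def by (simp add: inner_commute)
      finally show "ennreal (exp (c * norm (S n \<omega>))) \<le> (\<Sum>b\<in>Basis. ennreal (exp (((c * h) *\<^sub>R b) \<bullet> S n \<omega>)) + ennreal (exp ((-(c * h) *\<^sub>R b) \<bullet> S n \<omega>)))"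
        by (simp add: ennreal_plus[symmetric] del: ennreal_plus) (simp add: ennreal_leI)
    qed
    also have "\<dots> = (\<Sum>b\<in>Basis. (\<integral>\<^sup>+ \<omega>. ennreal (exp (((c * h) *\<^sub>R b) \<bullet> S n \<omega>)) \<partial>M) + (\<integral>\<^sup>+ \<omega>. ennreal (exp ((-(c * h) *\<^sub>R b) \<bullet> S n \<omega>)) \<partial>M))"
      by (subst nn_integral_sum) (auto simp: nn_integral_add)
    also have "\<dots> \<le> (\<Sum>b\<in>(Basis::'v set). ennreal (exp (B0 * lam d n)) + ennreal (exp (B0 * lam d n)))"
    proof (intro sum_mono add_mono)
      fix b :: 'v assume b: "b \<in> Basis"
      show "(\<integral>\<^sup>+ \<omega>. ennreal (exp (((c * h) *\<^sub>R b) \<bullet> S n \<omega>)) \<partial>M) \<le> ennreal (exp (B0 * lam d n))"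
        using Bf[OF n, of "(c * h) *\<^sub>R b"] B0ge[OF b, of "c*h"] lam1
        by (meson dual_order.trans ennreal_leI exp_le_cancel_iff mult_right_mono order_trans zero_le_one)
      show "(\<integral>\<^sup>+ \<omega>. ennreal (exp ((-(c * h) *\<^sub>R b) \<bullet> S n \<omega>)) \<partial>M) \<le> ennreal (exp (B0 * lam d n))"
        using Bf[OF n, of "(-(c * h)) *\<^sub>R b"] B0ge[OF b, of "-(c*h)"] lam1
        by (meson dual_order.trans ennreal_leI exp_le_cancel_iff mult_right_mono order_trans zero_le_one)
    qed
    also have "\<dots> = ennreal (2 * h * exp (B0 * lam d n))"
      unfolding h_def by (simp add: ennreal_plus[symmetric] ennreal_mult ennreal_of_nat_eq_real_of_nat mult_ac del: ennreal_plus) 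
    also have "\<dots> \<le> ennreal (exp (B * lam d n))"
    proof (rule ennreal_leI)
      have "2 * h * exp (B0 * lam d n) = exp (ln (2*h) + B0 * lam d n)" using h1 by (simp add: exp_add)
      also have "\<dots> \<le> exp (B * lam d n)" unfolding B_def using lnh lam1
        by (simp add: distrib_right) (metis mult_le_cancel_left1 mult.commute not_le order_less_le_trans order.trans mult_right_mono)
      finally show "2 * h * exp (B0 * lam d n) \<le> exp (B * lam d n)" .
    qed
    finally show ?thesis .
  qed
  moreover have "B \<ge> 0" unfolding B_def using B0nn lnh by simp
  ultimately show ?thesis by blast
qed

lemma tail_bound:
  "\<exists>B. \<forall>n\<ge>1. \<forall>R. measure M {\<omega>\<in>space M. norm (S n \<omega>) > R * lam d n} \<le> exp ((B - R) * lam d n)"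
proof -
  obtain B where B: "\<And>n. n\<ge>1 \<Longrightarrow> (\<integral>\<^sup>+ \<omega>. ennreal (exp (1 * norm (S n \<omega>))) \<partial>M) \<le> ennreal (exp (B * lam d n))"
    using normmom[of 1] by auto
  have "measure M {\<omega>\<in>space M. norm (S n \<omega>) > R * lam d n} \<le> exp ((B - R) * lam d n)" if n: "n \<ge> 1" for n R
  proof -
    let ?A = "{\<omega>\<in>space M. norm (S n \<omega>) > R * lam d n}"
    have A: "?A \<in> sets M" by measurable
    have "emeasure M ?A = (\<integral>\<^sup>+ \<omega>. indicator ?A \<omega> \<partial>M)" using A by simp
    also have "\<dots> \<le> (\<integral>\<^sup>+ \<omega>. ennreal (exp (- R * lam d n)) * ennreal (exp (1 * norm (S n \<omega>))) \<partial>M)"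
    proof (rule nn_integral_mono)
      fix \<omega> assume "\<omega> \<in> space M"
      show "indicator ?A \<omega> \<le> ennreal (exp (- R * lam d n)) * ennreal (exp (1 * norm (S n \<omega>)))"
      proof (cases "\<omega> \<in> ?A")
        case True
        then have "0 \<le> - R * lam d n + norm (S n \<omega>)" by auto
        then have "1 \<le> exp (- R * lam d n + norm (S n \<omega>))" by simp
        then show ?thesis using True by (simp add: ennreal_mult[symmetric] exp_add[symmetric])
      qed simp
    qed
    also have "\<dots> = ennreal (exp (- R * lam d n)) * (\<integral>\<^sup>+ \<omega>. ennreal (exp (1 * norm (S n \<omega>))) \<partial>M)"
      by (rule nn_integral_cmult) measurable
    also have "\<dots> \<le> ennreal (exp (- R * lam d n)) * ennreal (exp (B * lam d n))"
      by (intro mult_left_mono B[OF n]) auto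
    also have "\<dots> = ennreal (exp ((B - R) * lam d n))"
      by (simp add: ennreal_mult[symmetric] exp_add[symmetric] algebra_simps)
    finally show ?thesis by (simp add: measure_def enn2real_leI)
  qed
  then show ?thesis by blast
qed

lemma tight: "exp_tight M S d"
  unfolding exp_tight_def
proof (intro allI impI)
  fix \<alpha> :: real assume a: "\<alpha> > 0"
  obtain B where B: "\<And>n R. n\<ge>1 \<Longrightarrow> measure M {\<omega>\<in>space M. norm (S n \<omega>) > R * lam d n} \<le> exp ((B - R) * lam d n)"
    using tail_bound by blast
  define K where "K = cball (0::'v) (B + \<alpha>)"
  have "compact K" unfolding K_def by simp
  moreover have "limsup (\<lambda>n. lnE (measure M {\<omega>\<in>space M. scaleR (1 / lam d n) (S n \<omega>) \<notin> K})
                    / ereal (lam d n)) \<le> - ereal \<alpha>"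
  proof (rule Limsup_bounded)
    show "\<forall>\<^sub>F n in sequentially. lnE (measure M {\<omega>\<in>space M. scaleR (1 / lam d n) (S n \<omega>) \<notin> K})
                    / ereal (lam d n) \<le> - ereal \<alpha>"
    proof (rule eventually_sequentiallyI[of 1])
      fix n :: nat assume n: "n \<ge> 1"
      have lp: "lam d n > 0" using lam_pos n by blast
      have eq: "{\<omega>\<in>space M. scaleR (1 / lam d n) (S n \<omega>) \<notin> K} = {\<omega>\<in>space M. norm (S n \<omega>) > (B + \<alpha>) * lam d n}"
        using lp by (auto simp: K_def field_simps)
      define P where "P = measure M {\<omega>\<in>space M. norm (S n \<omega>) > (B + \<alpha>) * lam d n}"
      have P: "P \<le> exp (- \<alpha> * lam d n)" using B[OF n, of "B + \<alpha>"] by (simp add: P_def)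
      show "lnE (measure M {\<omega>\<in>space M. scaleR (1 / lam d n) (S n \<omega>) \<notin> K}) / ereal (lam d n) \<le> - ereal \<alpha>"
      proof (cases "P \<le> 0")
        case True
        then show ?thesis unfolding eq P_def[symmetric] using lp by (simp add: lnE_def)
      next
        case False
        then have "ln P \<le> - \<alpha> * lam d n" using P by (metis ln_exp ln_le_cancel_iff not_le exp_gt_zero order_less_le_trans)
        then have "ln P / lam d n \<le> - \<alpha>" using lp by (simp add: divide_le_eq)
        then show ?thesis unfolding eq P_def[symmetric] using lp False by (simp add: lnE_def)
      qed
    qed
  qed
  ultimately show "\<exists>K. compact K \<and> limsup (\<lambda>n. lnE (measure M {\<omega>\<in>space M. scaleR (1 / lam d n) (S n \<omega>) \<notin> K})
                    / ereal (lam d n)) \<le> - ereal \<alpha>" by blast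
qed

end


lemma young_ind: fixes x t i :: real assumes "t > 0" "x \<ge> 0" "i = 0 \<or> i = 1"
  shows "x * i \<le> (t * x^2 + i / t) / 2"
proof (cases "i = 0")
  case True then show ?thesis using assms by simp
next
  case False
  then have i: "i = 1" using assms by auto
  have "0 \<le> (t*x - 1)^2" by simp
  then have "2*t*x \<le> t^2 * x^2 + 1" by (simp add: power2_eq_square algebra_simps)
  then have "x \<le> (t^2 * x^2 + 1) / (2*t)" using assms(1) by (simp add: le_divide_eq mult_ac)
  also have "(t^2 * x^2 + 1) / (2*t) = (t * x^2 + 1 / t) / 2" using assms(1) by (simp add: field_simps power2_eq_square)
  finally show ?thesis using i by simp
qed

context prob_space begin

lemma key:
  fixes X Y :: "'a \<Rightarrow> real" and G :: "'a set" and l \<beta> \<gamma> C \<delta> :: real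
  assumes [measurable]: "X \<in> borel_measurable M" "Y \<in> borel_measurable M" "G \<in> sets M"
    and Xnn: "\<And>\<omega>. X \<omega> \<ge> 0" and Ynn: "\<And>\<omega>. Y \<omega> \<ge> 0"
    and XY: "\<And>\<omega>. \<omega> \<in> G \<Longrightarrow> X \<omega> * exp (- l * \<delta>) \<le> Y \<omega>"
    and EX: "(\<integral>\<^sup>+ \<omega>. ennreal (X \<omega>) \<partial>M) \<ge> ennreal (exp (- \<beta> * l))"
    and EX2: "(\<integral>\<^sup>+ \<omega>. ennreal ((X \<omega>)^2) \<partial>M) \<le> ennreal (exp (\<gamma> * l))"
    and PG: "measure M (space M - G) \<le> exp (- C * l)"
    and C: "C \<ge> 2*\<beta> + \<gamma> + 2" and l: "l \<ge> 1"
  shows "ennreal (exp (- l * \<delta>) / 2) * (\<integral>\<^sup>+ \<omega>. ennreal (X \<omega>) \<partial>M) \<le> (\<integral>\<^sup>+ \<omega>. ennreal (Y \<omega>) \<partial>M)"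
proof -
  define t where "t = exp (- (\<beta> + \<gamma> + 1) * l)"
  have t: "t > 0" unfolding t_def by simp
  define Gc where "Gc = space M - G"
  have [measurable]: "Gc \<in> sets M" unfolding Gc_def by measurable
  have fin: "(\<integral>\<^sup>+ \<omega>. ennreal (X \<omega>) \<partial>M) < \<top>"
  proof -
    have "(\<integral>\<^sup>+ \<omega>. ennreal (X \<omega>) \<partial>M) \<le> (\<integral>\<^sup>+ \<omega>. ennreal (1 + (X \<omega>)^2) \<partial>M)"
    proof (rule nn_integral_mono)
      fix \<omega> have "X \<omega> \<le> 1 + (X \<omega>)^2"
      proof (cases "X \<omega> \<le> 1")
        case False
        then have "X \<omega> * 1 \<le> X \<omega> * X \<omega>" by (intro mult_left_mono) auto
        then show ?thesis by (simp add: power2_eq_square)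
      qed (simp add: add_increasing2)
      then show "ennreal (X \<omega>) \<le> ennreal (1 + (X \<omega>)^2)" by (rule ennreal_leI)
    qed
    also have "\<dots> = (\<integral>\<^sup>+ \<omega>. 1 + ennreal ((X \<omega>)^2) \<partial>M)"
      by (intro nn_integral_cong) (simp add: ennreal_plus)
    also have "\<dots> = 1 + (\<integral>\<^sup>+ \<omega>. ennreal ((X \<omega>)^2) \<partial>M)"
      by (subst nn_integral_add) (auto simp: emeasure_space_1)
    also have "\<dots> < \<top>" using EX2 by (metis ennreal_add_eq_top ennreal_less_top ennreal_one_less_top le_less_trans less_top)
    finally show ?thesis .
  qed
  have split: "(\<integral>\<^sup>+ \<omega>. ennreal (X \<omega>) \<partial>M) = (\<integral>\<^sup>+ \<omega>. ennreal (X \<omega>) * indicator G \<omega> \<partial>M) + (\<integral>\<^sup>+ \<omega>. ennreal (X \<omega>) * indicator Gc \<omega> \<partial>M)"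
  proof -
    have "(\<integral>\<^sup>+ \<omega>. ennreal (X \<omega>) \<partial>M) = (\<integral>\<^sup>+ \<omega>. ennreal (X \<omega>) * indicator G \<omega> + ennreal (X \<omega>) * indicator Gc \<omega> \<partial>M)"
      using sets.sets_into_space[of G M] by (intro nn_integral_cong) (auto simp: Gc_def indicator_def)
    also have "\<dots> = (\<integral>\<^sup>+ \<omega>. ennreal (X \<omega>) * indicator G \<omega> \<partial>M) + (\<integral>\<^sup>+ \<omega>. ennreal (X \<omega>) * indicator Gc \<omega> \<partial>M)" by (rule nn_integral_add) measurable
    finally show ?thesis .
  qed
  have bad: "(\<integral>\<^sup>+ \<omega>. ennreal (X \<omega>) * indicator Gc \<omega> \<partial>M) \<le> ennreal (exp (- (\<beta> + 1) * l))"
  proof -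
    have "(\<integral>\<^sup>+ \<omega>. ennreal (X \<omega>) * indicator Gc \<omega> \<partial>M) \<le> (\<integral>\<^sup>+ \<omega>. ennreal (t/2) * ennreal ((X \<omega>)^2) + ennreal (1/(2*t)) * indicator Gc \<omega> \<partial>M)"
    proof (rule nn_integral_mono)
      fix \<omega>
      have "X \<omega> * indicator Gc \<omega> \<le> (t * (X \<omega>)^2 + indicator Gc \<omega> / t) / 2"
        by (rule young_ind[OF t Xnn]) (auto simp: indicator_def)
      then have "ennreal (X \<omega> * indicator Gc \<omega>) \<le> ennreal ((t/2) * (X \<omega>)^2 + (1/(2*t)) * indicator Gc \<omega>)"
        by (intro ennreal_leI) (simp add: field_simps)
      then show "ennreal (X \<omega>) * indicator Gc \<omega> \<le> ennreal (t/2) * ennreal ((X \<omega>)^2) + ennreal (1/(2*t)) * indicator Gc \<omega>"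
        using t Xnn[of \<omega>] by (cases "\<omega> \<in> Gc") (simp_all add: indicator_def ennreal_plus[symmetric] ennreal_mult[symmetric] del: ennreal_plus)
    qed
    also have "\<dots> = ennreal (t/2) * (\<integral>\<^sup>+ \<omega>. ennreal ((X \<omega>)^2) \<partial>M) + ennreal (1/(2*t)) * emeasure M Gc"
      by (simp add: nn_integral_add nn_integral_cmult nn_integral_cmult_indicator)
    also have "\<dots> \<le> ennreal (t/2) * ennreal (exp (\<gamma> * l)) + ennreal (1/(2*t)) * ennreal (exp (- C * l))"
    proof (intro add_mono mult_left_mono EX2)
      show "emeasure M Gc \<le> ennreal (exp (- C * l))"
        using PG unfolding Gc_def by (simp add: emeasure_eq_measure ennreal_leI)
    qed auto
    also have "\<dots> = ennreal (t/2 * exp (\<gamma> * l) + 1/(2*t) * exp (- C * l))"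
      using t by (simp add: ennreal_plus[symmetric] ennreal_mult[symmetric] del: ennreal_plus)
    also have "\<dots> \<le> ennreal (exp (- (\<beta> + 1) * l))"
    proof (rule ennreal_leI)
      have 1: "t * exp (\<gamma> * l) = exp (- (\<beta> + 1) * l)" unfolding t_def by (simp add: exp_add[symmetric] algebra_simps)
      have "1/t * exp (- C * l) = exp ((\<beta> + \<gamma> + 1 - C) * l)" unfolding t_def
        by (simp add: exp_add[symmetric] exp_minus field_simps)
      also have "\<dots> \<le> exp (- (\<beta> + 1) * l)" using C l by (intro exp_mono mult_right_mono) auto
      finally have 2: "1/t * exp (- C * l) \<le> exp (- (\<beta> + 1) * l)" .
      show "t/2 * exp (\<gamma> * l) + 1/(2*t) * exp (- C * l) \<le> exp (- (\<beta> + 1) * l)"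
        using 1 2 by (simp add: field_simps)
    qed
    finally show ?thesis .
  qed
  have "ennreal (exp (- (\<beta> + 1) * l)) = ennreal (exp (- l)) * ennreal (exp (- \<beta> * l))"
    by (simp add: ennreal_mult[symmetric] exp_add[symmetric] algebra_simps)
  also have "\<dots> \<le> ennreal (1/2) * (\<integral>\<^sup>+ \<omega>. ennreal (X \<omega>) \<partial>M)"
  proof (intro mult_mono EX ennreal_leI)
    have "exp (- l) \<le> exp (-1)" using l by simp
    also have "exp (-1::real) \<le> 1/2"
    proof -
      have "(2::real) \<le> 1 + 1" by simp
      also have "\<dots> \<le> exp 1" using exp_ge_add_one_self[of 1] by simp
      finally show ?thesis by (simp add: exp_minus field_simps)
    qed
    finally show "exp (- l) \<le> 1/2" .
  qed auto
  finally have bad2: "(\<integral>\<^sup>+ \<omega>. ennreal (X \<omega>) * indicator Gc \<omega> \<partial>M) \<le> ennreal (1/2) * (\<integral>\<^sup>+ \<omega>. ennreal (X \<omega>) \<partial>M)"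
    using bad by simp
  have good: "ennreal (1/2) * (\<integral>\<^sup>+ \<omega>. ennreal (X \<omega>) \<partial>M) \<le> (\<integral>\<^sup>+ \<omega>. ennreal (X \<omega>) * indicator G \<omega> \<partial>M)"
  proof -
    define a where "a = (\<integral>\<^sup>+ \<omega>. ennreal (X \<omega>) * indicator G \<omega> \<partial>M)"
    define b where "b = (\<integral>\<^sup>+ \<omega>. ennreal (X \<omega>) * indicator Gc \<omega> \<partial>M)"
    define x where "x = (\<integral>\<^sup>+ \<omega>. ennreal (X \<omega>) \<partial>M)"
    have "x = a + b" "b \<le> ennreal (1/2) * x" "x < \<top>" using split bad2 fin by (auto simp: a_def b_def x_def)
    have "a < \<top>" "b < \<top>" using \<open>x = a + b\<close> \<open>x < \<top>\<close> by (auto simp: top_unique)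
    then obtain ra rb where ra: "a = ennreal ra" "ra \<ge> 0" and rb: "b = ennreal rb" "rb \<ge> 0"
      by (metis ennreal_cases less_irrefl)
    have xr: "x = ennreal (ra + rb)" using \<open>x = a + b\<close> ra rb by simp
    have hx: "ennreal (1/2) * x = ennreal ((1/2)*(ra+rb))"
      unfolding xr by (rule ennreal_mult[symmetric]) (use ra rb in auto)
    have "ennreal rb \<le> ennreal ((1/2) * (ra + rb))" using \<open>b \<le> ennreal (1/2) * x\<close> rb hx
      by simp
    then have "rb \<le> (1/2) * (ra + rb)" using ra rb by (simp add: ennreal_le_iff)
    then have "(1/2) * (ra + rb) \<le> ra" by simp
    then show ?thesis unfolding a_def[symmetric] x_def[symmetric] using hx ra
      by (simp add: ennreal_leI)
  qed
  have "ennreal (exp (- l * \<delta>) / 2) * (\<integral>\<^sup>+ \<omega>. ennreal (X \<omega>) \<partial>M) = ennreal (exp (- l * \<delta>)) * (ennreal (1/2) * (\<integral>\<^sup>+ \<omega>. ennreal (X \<omega>) \<partial>M))"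
  proof -
    have "ennreal (exp (- l * \<delta>) / 2) = ennreal (exp (- l * \<delta>)) * ennreal (1/2)"
      by (subst ennreal_mult[symmetric]) auto
    then show ?thesis by (simp only: mult.assoc)
  qed
  also have "\<dots> \<le> ennreal (exp (- l * \<delta>)) * (\<integral>\<^sup>+ \<omega>. ennreal (X \<omega>) * indicator G \<omega> \<partial>M)"
    by (intro mult_left_mono good) auto
  also have "\<dots> = (\<integral>\<^sup>+ \<omega>. ennreal (exp (- l * \<delta>)) * (ennreal (X \<omega>) * indicator G \<omega>) \<partial>M)"
    by (rule nn_integral_cmult[symmetric]) measurable
  also have "\<dots> \<le> (\<integral>\<^sup>+ \<omega>. ennreal (Y \<omega>) \<partial>M)"
  proof (rule nn_integral_mono)
    fix \<omega> show "ennreal (exp (- l * \<delta>)) * (ennreal (X \<omega>) * indicator G \<omega>) \<le> ennreal (Y \<omega>)"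
      using XY[of \<omega>] Xnn[of \<omega>] by (cases "\<omega> \<in> G") (auto simp: ennreal_mult[symmetric] mult.commute intro!: ennreal_leI)
  qed
  finally show ?thesis .
qed

end


lemma lip_lower: assumes "L-lipschitz_on UNIV f" shows "f y \<ge> f 0 - L * norm y"
  using lipschitz_onD[OF assms, of y 0] by (simp add: dist_norm abs_le_iff dist_real_def)

lemma lip_upper: assumes "L-lipschitz_on UNIV f" shows "f y \<le> f 0 + L * norm y"
  using lipschitz_onD[OF assms, of y 0] by (simp add: dist_norm abs_le_iff dist_real_def)

lemma lip_diff: assumes "L-lipschitz_on UNIV f" shows "f y \<ge> f x - L * norm (y - x)"
  using lipschitz_onD[OF assms, of y x] by (simp add: dist_norm abs_le_iff dist_real_def)

lemma rescale_det:
  fixes f :: "'v::real_normed_vector \<Rightarrow> real" and T T' :: 'v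
  assumes lip: "L-lipschitz_on UNIV f"
    and l: "l > 0" and l': "l' \<ge> l"
    and T: "norm T \<le> R * l" and T': "norm (T' - T) \<le> \<eta> * l"
    and R: "R \<ge> 0" and \<eta>: "\<eta> \<ge> 0"
  shows "l' * f (scaleR (1/l') T') \<ge> l * f (scaleR (1/l) T)
          - l * ((l'/l - 1) * (\<bar>f 0\<bar> + L * (R + \<eta>)) + L * (\<eta> + R * (l'/l - 1)))"
proof -
  have L: "L \<ge> 0" using lip by (simp add: lipschitz_on_def)
  define \<rho> where "\<rho> = l'/l"
  have \<rho>: "\<rho> \<ge> 1" "l' = \<rho> * l" using l l' by (auto simp: \<rho>_def field_simps)
  have l'p: "l' > 0" using l l' by simp
  have nT': "norm T' \<le> (R + \<eta>) * l"
    using norm_triangle_ineq[of T "T' - T"] T T' by (simp add: algebra_simps)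
  have "norm (scaleR (1/l') T') \<le> R + \<eta>"
  proof -
    have "norm (scaleR (1/l') T') = norm T' / l'" using l'p by simp
    also have "\<dots> \<le> (R + \<eta>) * l / l'" using nT' l'p by (simp add: divide_right_mono)
    also have "\<dots> \<le> R + \<eta>" using l l' R \<eta> l'p by (simp add: divide_le_eq mult_left_mono)
    finally show ?thesis .
  qed
  then have "L * norm (scaleR (1/l') T') \<le> L * (R + \<eta>)" using L by (rule mult_left_mono)
  then have f1: "f (scaleR (1/l') T') \<ge> - (\<bar>f 0\<bar> + L * (R + \<eta>))"
    using lip_lower[OF lip, of "scaleR (1/l') T'"] abs_ge_minus_self[of "f 0"] by linarith
  have "norm (scaleR (1/l') T' - scaleR (1/l) T) \<le> \<eta> + R * (\<rho> - 1)"
  proof -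
    have eq: "scaleR (1/l') T' - scaleR (1/l) T = scaleR (1/l') (T' - T) + scaleR (1/l' - 1/l) T"
      by (simp add: algebra_simps)
    have "norm (scaleR (1/l') (T' - T)) \<le> \<eta>"
    proof -
      have "norm (scaleR (1/l') (T' - T)) = norm (T' - T) / l'" using l'p by simp
      also have "\<dots> \<le> \<eta> * l / l'" using T' l'p by (simp add: divide_right_mono)
      also have "\<dots> \<le> \<eta>" using l l' \<eta> l'p by (simp add: divide_le_eq mult_left_mono)
      finally show ?thesis .
    qed
    moreover have "norm (scaleR (1/l' - 1/l) T) \<le> R * (\<rho> - 1)"
    proof -
      have "\<bar>1/l' - 1/l\<bar> = 1/l - 1/l'" using l l' l'p by (simp add: frac_le)
      then have "norm (scaleR (1/l' - 1/l) T) = (1/l - 1/l') * norm T" by simp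
      also have "\<dots> \<le> (1/l - 1/l') * (R * l)" using T l l' l'p by (intro mult_left_mono) (auto simp: frac_le)
      also have "\<dots> = R * (1 - 1/\<rho>)" using l l'p \<rho> by (simp add: field_simps)
      also have "\<dots> \<le> R * (\<rho> - 1)"
      proof -
        have sq: "0 \<le> (\<rho> - 1)*(\<rho> - 1)" by simp
        have sq2: "0 \<le> \<rho>*\<rho> - 2*\<rho> + 1" using sq by (simp add: algebra_simps)
        have "1 - 1/\<rho> \<le> \<rho> - 1" using \<rho>(1) sq2 by (simp add: field_simps)
        then show ?thesis using R by (simp add: mult_left_mono)
      qed
      finally show ?thesis .
    qed
    ultimately show ?thesis unfolding eq using norm_triangle_ineq[of "scaleR (1/l') (T' - T)" "scaleR (1/l' - 1/l) T"] by linarith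
  qed
  then have "L * norm (scaleR (1/l') T' - scaleR (1/l) T) \<le> L * (\<eta> + R * (\<rho> - 1))" using L by (rule mult_left_mono)
  then have f2: "f (scaleR (1/l') T') \<ge> f (scaleR (1/l) T) - L * (\<eta> + R * (\<rho> - 1))"
    using lip_diff[OF lip, of "scaleR (1/l) T" "scaleR (1/l') T'"] by linarith
  have "l' * f (scaleR (1/l') T') = (l' - l) * f (scaleR (1/l') T') + l * f (scaleR (1/l') T')"
    by (simp add: algebra_simps)
  also have "\<dots> \<ge> (l' - l) * (- (\<bar>f 0\<bar> + L * (R + \<eta>))) + l * (f (scaleR (1/l) T) - L * (\<eta> + R * (\<rho> - 1)))"
    using f1 f2 l l' by (intro add_mono mult_left_mono) auto
  finally have fin: "l' * f (scaleR (1/l') T') \<ge> (l' - l) * (- (\<bar>f 0\<bar> + L * (R + \<eta>))) + l * (f (scaleR (1/l) T) - L * (\<eta> + R * (\<rho> - 1)))" .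
  have e1: "l * ((l'/l - 1) * (\<bar>f 0\<bar> + L * (R + \<eta>))) = (l' - l) * (\<bar>f 0\<bar> + L * (R + \<eta>))"
    using l by (simp add: field_simps)
  have e2: "l * ((l'/l - 1) * (\<bar>f 0\<bar> + L * (R + \<eta>)) + L * (\<eta> + R * (l'/l - 1)))
     = l * ((l'/l - 1) * (\<bar>f 0\<bar> + L * (R + \<eta>))) + l * (L * (\<eta> + R * (\<rho> - 1)))"
    unfolding \<rho>_def by (simp add: distrib_left)
  show ?thesis unfolding e2 e1 using fin by (simp add: algebra_simps)
qed



locale lipsetup = expmom M S d for M :: "'a measure" and S :: "nat \<Rightarrow> 'a \<Rightarrow> 'v::euclidean_space" and d :: nat +
  fixes f :: "'v \<Rightarrow> real" and L :: real
  assumes lip: "L-lipschitz_on UNIV f" and d1: "d \<ge> 1"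
begin

lemma L_nonneg: "L \<ge> 0" using lip by (simp add: lipschitz_on_def)

lemma f_meas[measurable]: "f \<in> borel_measurable borel"
  by (intro borel_measurable_continuous_onI lipschitz_on_continuous_on[OF lip])

lemma exp_half: "exp (- (l::real)) \<le> 1/2" if "l \<ge> 1"
proof -
  have "exp (- l) \<le> exp (-1)" using that by simp
  also have "exp (-1::real) \<le> 1/2"
  proof -
    have "(2::real) \<le> 1 + 1" by simp
    also have "\<dots> \<le> exp 1" using exp_ge_add_one_self[of 1] by simp
    finally show ?thesis by (simp add: exp_minus field_simps)
  qed
  finally show ?thesis .
qed

lemma LB: "\<exists>\<beta>\<ge>0. \<forall>n\<ge>1. \<forall>\<mu>\<ge>lam d n.
   (\<integral>\<^sup>+ \<omega>. ennreal (exp (\<mu> * f (scaleR (1/\<mu>) (S n \<omega>)))) \<partial>M) \<ge> ennreal (exp (- \<beta> * \<mu>))"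
proof -
  obtain B where tail: "\<And>n R. n\<ge>1 \<Longrightarrow> measure M {\<omega>\<in>space M. norm (S n \<omega>) > R * lam d n} \<le> exp ((B - R) * lam d n)"
    using tail_bound by blast
  define R where "R = \<bar>B\<bar> + 1"
  define \<beta> where "\<beta> = \<bar>f 0\<bar> + L * R + 1"
  have R0: "R \<ge> 0" unfolding R_def by simp
  have "(\<integral>\<^sup>+ \<omega>. ennreal (exp (\<mu> * f (scaleR (1/\<mu>) (S n \<omega>)))) \<partial>M) \<ge> ennreal (exp (- \<beta> * \<mu>))"
    if n: "n \<ge> 1" and mu: "\<mu> \<ge> lam d n" for n \<mu>
  proof -
    have l1: "lam d n \<ge> 1" using lam_ge1 n by blast
    have mu1: "\<mu> \<ge> 1" "\<mu> > 0" using l1 mu by auto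
    define A where "A = {\<omega>\<in>space M. norm (S n \<omega>) \<le> R * lam d n}"
    have [measurable]: "A \<in> sets M" unfolding A_def by measurable
    have cA: "space M - A = {\<omega>\<in>space M. norm (S n \<omega>) > R * lam d n}" unfolding A_def by auto
    have "prob (space M - A) \<le> exp ((B - R) * lam d n)" unfolding cA by (rule tail[OF n])
    also have "\<dots> \<le> exp (- lam d n)"
    proof (intro exp_mono)
      have "(B - R) * lam d n \<le> (-1) * lam d n" using l1 by (intro mult_right_mono) (auto simp: R_def)
      then show "(B - R) * lam d n \<le> - lam d n" by simp
    qed
    also have "\<dots> \<le> 1/2" using exp_half l1 by blast
    finally have "prob A \<ge> 1/2" using prob_compl[of A] by simp
    then have pA: "emeasure M A \<ge> ennreal (exp (- \<mu>))"
      using exp_half[OF mu1(1)] by (simp add: emeasure_eq_measure ennreal_leI)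
    have "ennreal (exp (- \<beta> * \<mu>)) = ennreal (exp (- (\<bar>f 0\<bar> + L * R) * \<mu>)) * ennreal (exp (- \<mu>))"
      by (simp add: ennreal_mult[symmetric] exp_add[symmetric] \<beta>_def algebra_simps)
    also have "\<dots> \<le> ennreal (exp (- (\<bar>f 0\<bar> + L * R) * \<mu>)) * emeasure M A"
      by (intro mult_left_mono pA) auto
    also have "\<dots> = (\<integral>\<^sup>+ \<omega>. ennreal (exp (- (\<bar>f 0\<bar> + L * R) * \<mu>)) * indicator A \<omega> \<partial>M)"
      by (simp add: nn_integral_cmult_indicator)
    also have "\<dots> \<le> (\<integral>\<^sup>+ \<omega>. ennreal (exp (\<mu> * f (scaleR (1/\<mu>) (S n \<omega>)))) \<partial>M)"
    proof (rule nn_integral_mono)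
      fix \<omega> assume \<omega>: "\<omega> \<in> space M"
      show "ennreal (exp (- (\<bar>f 0\<bar> + L * R) * \<mu>)) * indicator A \<omega> \<le> ennreal (exp (\<mu> * f (scaleR (1/\<mu>) (S n \<omega>))))"
      proof (cases "\<omega> \<in> A")
        case True
        then have nS: "norm (S n \<omega>) \<le> R * \<mu>" unfolding A_def using mu R0 by (auto intro: order_trans mult_left_mono)
        have "f (scaleR (1/\<mu>) (S n \<omega>)) \<ge> f 0 - L * norm (scaleR (1/\<mu>) (S n \<omega>))" by (rule lip_lower[OF lip])
        also have "L * norm (scaleR (1/\<mu>) (S n \<omega>)) = L * norm (S n \<omega>) / \<mu>" using mu1 by simp
        finally have "\<mu> * f (scaleR (1/\<mu>) (S n \<omega>)) \<ge> \<mu> * f 0 - L * norm (S n \<omega>)"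
          using mu1 by (simp add: field_simps)
        moreover have "L * norm (S n \<omega>) \<le> L * (R * \<mu>)" using nS L_nonneg by (intro mult_left_mono) auto
        moreover have "\<mu> * f 0 \<ge> - \<bar>f 0\<bar> * \<mu>" using mu1 by (simp add: abs_if)
        ultimately have "- (\<bar>f 0\<bar> + L * R) * \<mu> \<le> \<mu> * f (scaleR (1/\<mu>) (S n \<omega>))" by (simp add: algebra_simps)
        then show ?thesis using True by (simp add: ennreal_leI)
      qed simp
    qed
    finally show ?thesis .
  qed
  moreover have "\<beta> \<ge> 0" unfolding \<beta>_def using R0 L_nonneg by simp
  ultimately show ?thesis by blast
qed

lemma UB: assumes q: "q \<ge> 0" shows "\<exists>\<gamma>\<ge>0. \<forall>n\<ge>1. \<forall>\<mu>\<ge>lam d n.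
   (\<integral>\<^sup>+ \<omega>. ennreal (exp (q * (\<mu> * f (scaleR (1/\<mu>) (S n \<omega>))))) \<partial>M) \<le> ennreal (exp (\<gamma> * \<mu>))"
proof -
  obtain B where B0: "B \<ge> 0" and B: "\<And>n. n\<ge>1 \<Longrightarrow> (\<integral>\<^sup>+ \<omega>. ennreal (exp ((q*L) * norm (S n \<omega>))) \<partial>M) \<le> ennreal (exp (B * lam d n))"
    using normmom[of "q*L"] q L_nonneg by auto
  define \<gamma> where "\<gamma> = q * \<bar>f 0\<bar> + B"
  have "(\<integral>\<^sup>+ \<omega>. ennreal (exp (q * (\<mu> * f (scaleR (1/\<mu>) (S n \<omega>))))) \<partial>M) \<le> ennreal (exp (\<gamma> * \<mu>))"
    if n: "n \<ge> 1" and mu: "\<mu> \<ge> lam d n" for n \<mu>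
  proof -
    have l1: "lam d n \<ge> 1" using lam_ge1 n by blast
    have mu1: "\<mu> \<ge> 1" "\<mu> > 0" using l1 mu by auto
    have "(\<integral>\<^sup>+ \<omega>. ennreal (exp (q * (\<mu> * f (scaleR (1/\<mu>) (S n \<omega>))))) \<partial>M)
       \<le> (\<integral>\<^sup>+ \<omega>. ennreal (exp (q * \<bar>f 0\<bar> * \<mu>)) * ennreal (exp ((q*L) * norm (S n \<omega>))) \<partial>M)"
    proof (rule nn_integral_mono)
      fix \<omega>
      have "f (scaleR (1/\<mu>) (S n \<omega>)) \<le> f 0 + L * norm (scaleR (1/\<mu>) (S n \<omega>))" by (rule lip_upper[OF lip])
      also have "L * norm (scaleR (1/\<mu>) (S n \<omega>)) = L * norm (S n \<omega>) / \<mu>" using mu1 by simp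
      finally have "\<mu> * f (scaleR (1/\<mu>) (S n \<omega>)) \<le> \<mu> * f 0 + L * norm (S n \<omega>)"
        using mu1 by (simp add: field_simps)
      also have "\<mu> * f 0 \<le> \<bar>f 0\<bar> * \<mu>" using mu1 by (simp add: abs_if)
      finally have "q * (\<mu> * f (scaleR (1/\<mu>) (S n \<omega>))) \<le> q * (\<bar>f 0\<bar> * \<mu> + L * norm (S n \<omega>))"
        using q by (simp add: mult_left_mono)
      then show "ennreal (exp (q * (\<mu> * f (scaleR (1/\<mu>) (S n \<omega>))))) \<le> ennreal (exp (q * \<bar>f 0\<bar> * \<mu>)) * ennreal (exp ((q*L) * norm (S n \<omega>)))"
        by (simp add: ennreal_mult[symmetric] exp_add[symmetric] algebra_simps ennreal_leI)
    qed
    also have "\<dots> = ennreal (exp (q * \<bar>f 0\<bar> * \<mu>)) * (\<integral>\<^sup>+ \<omega>. ennreal (exp ((q*L) * norm (S n \<omega>))) \<partial>M)"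
      by (rule nn_integral_cmult) measurable
    also have "\<dots> \<le> ennreal (exp (q * \<bar>f 0\<bar> * \<mu>)) * ennreal (exp (B * \<mu>))"
      using B[OF n] B0 mu by (intro mult_left_mono) (auto intro: order_trans ennreal_leI mult_left_mono)
    also have "\<dots> = ennreal (exp (\<gamma> * \<mu>))"
      by (simp add: \<gamma>_def ennreal_mult[symmetric] exp_add[symmetric] algebra_simps)
    finally show ?thesis .
  qed
  moreover have "\<gamma> \<ge> 0" unfolding \<gamma>_def using B0 q by simp
  ultimately show ?thesis by blast
qed

end


lemma loglem:
  fixes x y l l' \<rho> \<delta> \<gamma> :: real
  assumes x: "x > 0" and xy: "exp (- l * \<delta>) / 2 * x \<le> y" and y: "y \<le> exp (\<gamma> * l')"
    and l: "l > 0" and l': "l' = \<rho> * l" and \<rho>: "\<rho> \<ge> 1" and \<gamma>: "\<gamma> \<ge> 0"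
  shows "ln y / l' \<ge> ln x / l - \<delta> - ln 2 / l - \<gamma> * (\<rho> - 1)"
proof -
  have p: "exp (- l * \<delta>) / 2 * x > 0" using x by simp
  then have yp: "y > 0" using xy by linarith
  have "ln (exp (- l * \<delta>) / 2 * x) = - l * \<delta> - ln 2 + ln x"
    using x by (simp add: ln_mult ln_div)
  moreover have "ln (exp (- l * \<delta>) / 2 * x) \<le> ln y" using p yp xy by simp
  ultimately have "ln y \<ge> - l * \<delta> - ln 2 + ln x" by simp
  then have "ln x \<le> ln y + l * \<delta> + ln 2" by simp
  then have "ln x / l \<le> (ln y + l * \<delta> + ln 2) / l" using l by (simp add: divide_right_mono)
  also have "\<dots> = ln y / l + \<delta> + ln 2 / l" using l by (simp add: field_simps)
  finally have u1: "ln y / l \<ge> ln x / l - \<delta> - ln 2 / l" by simp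
  have "ln y \<le> \<gamma> * l'" using y yp by (metis ln_exp ln_le_cancel_iff exp_gt_zero)
  then have u2: "ln y / l \<le> \<gamma> * \<rho>" using l l' by (simp add: divide_le_eq mult.assoc)
  define u where "u = ln y / l"
  have eq: "ln y / l' = u / \<rho>" using l l' \<rho> by (simp add: u_def)
  have "(\<rho> - 1) * u \<le> (\<rho> - 1) * (\<gamma> * \<rho>)" using u2 \<rho> by (intro mult_left_mono) (auto simp: u_def)
  then have "u / \<rho> \<ge> u - \<gamma> * (\<rho> - 1)" using \<rho> by (simp add: field_simps)
  then show ?thesis using eq u1 unfolding u_def by linarith
qed

context lipsetup begin

definition EV where "EV n \<mu> = (\<integral>\<^sup>+ \<omega>. ennreal (exp (\<mu> * f (scaleR (1/\<mu>) (S n \<omega>)))) \<partial>M)"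

definition good_consts :: "real \<Rightarrow> real \<Rightarrow> real \<Rightarrow> bool" where
  "good_consts \<beta> \<gamma>1 \<gamma>2 \<longleftrightarrow> \<beta> \<ge> 0 \<and> \<gamma>1 \<ge> 0 \<and> \<gamma>2 \<ge> 0 \<and> (\<forall>n\<ge>1. \<forall>\<mu>\<ge>lam d n.
     EV n \<mu> \<ge> ennreal (exp (- \<beta> * \<mu>)) \<and> EV n \<mu> \<le> ennreal (exp (\<gamma>1 * \<mu>)) \<and>
     (\<integral>\<^sup>+ \<omega>. ennreal ((exp (\<mu> * f (scaleR (1/\<mu>) (S n \<omega>))))^2) \<partial>M) \<le> ennreal (exp (\<gamma>2 * \<mu>)))"

lemma ex_good: "\<exists>\<beta> \<gamma>1 \<gamma>2. good_consts \<beta> \<gamma>1 \<gamma>2"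
proof -
  obtain \<beta> where b: "\<beta> \<ge> 0" "\<And>n \<mu>. n\<ge>1 \<Longrightarrow> \<mu>\<ge>lam d n \<Longrightarrow> EV n \<mu> \<ge> ennreal (exp (- \<beta> * \<mu>))"
    using LB unfolding EV_def by blast
  obtain g1 where g1: "g1 \<ge> 0" "\<And>n \<mu>. n\<ge>1 \<Longrightarrow> \<mu>\<ge>lam d n \<Longrightarrow>
     (\<integral>\<^sup>+ \<omega>. ennreal (exp (1 * (\<mu> * f (scaleR (1/\<mu>) (S n \<omega>))))) \<partial>M) \<le> ennreal (exp (g1 * \<mu>))"
    using UB[of 1] by auto
  obtain g2 where g2: "g2 \<ge> 0" "\<And>n \<mu>. n\<ge>1 \<Longrightarrow> \<mu>\<ge>lam d n \<Longrightarrow>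
     (\<integral>\<^sup>+ \<omega>. ennreal (exp (2 * (\<mu> * f (scaleR (1/\<mu>) (S n \<omega>))))) \<partial>M) \<le> ennreal (exp (g2 * \<mu>))"
    using UB[of 2] by auto
  have "good_consts \<beta> g1 g2" unfolding good_consts_def
    using b g1 g2 by (auto simp: EV_def exp_double[symmetric])
  then show ?thesis by blast
qed

lemma EV_real:
  assumes g: "good_consts \<beta> \<gamma>1 \<gamma>2" and n: "n \<ge> 1" and mu: "\<mu> \<ge> lam d n"
  shows "EV n \<mu> = ennreal (enn2real (EV n \<mu>))" "enn2real (EV n \<mu>) \<ge> exp (- \<beta> * \<mu>)"
    "enn2real (EV n \<mu>) \<le> exp (\<gamma>1 * \<mu>)" "enn2real (EV n \<mu>) > 0"
proof -
  have a: "EV n \<mu> \<ge> ennreal (exp (- \<beta> * \<mu>))" "EV n \<mu> \<le> ennreal (exp (\<gamma>1 * \<mu>))"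
    using g n mu unfolding good_consts_def by auto
  then have fin: "EV n \<mu> < \<top>" using ennreal_less_top le_less_trans by blast
  then show e: "EV n \<mu> = ennreal (enn2real (EV n \<mu>))" by simp
  show b: "enn2real (EV n \<mu>) \<ge> exp (- \<beta> * \<mu>)" using a(1) fin
    by (metis e ennreal_le_iff enn2real_nonneg)
  show "enn2real (EV n \<mu>) \<le> exp (\<gamma>1 * \<mu>)" using a(2) fin
    by (metis e ennreal_le_iff enn2real_nonneg exp_ge_zero)
  show "enn2real (EV n \<mu>) > 0" using b by (meson exp_gt_zero less_le_trans)
qed

lemma compare:
  assumes g: "good_consts \<beta> \<gamma>1 \<gamma>2"
    and n: "n \<ge> 1" and n': "n' \<ge> 1"
    and l'1: "l' \<ge> lam d n" and l'2: "l' \<ge> lam d n'"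
    and G[measurable]: "G \<in> sets M"
    and GS: "\<And>\<omega>. \<omega> \<in> G \<Longrightarrow> norm (S n \<omega>) \<le> R * lam d n \<and> norm (S n' \<omega> - S n \<omega>) \<le> \<eta> * lam d n"
    and R: "R \<ge> 0" and \<eta>: "\<eta> \<ge> 0"
    and PG: "measure M (space M - G) \<le> exp (- (2*\<beta> + \<gamma>2 + 2) * lam d n)"
  shows "ln (enn2real (EV n' l')) / l' \<ge> ln (enn2real (EV n (lam d n))) / lam d n
     - ((l' / lam d n - 1) * (\<bar>f 0\<bar> + L * (R + \<eta>)) + L * (\<eta> + R * (l' / lam d n - 1)))
     - ln 2 / lam d n - \<gamma>1 * (l' / lam d n - 1)"
proof -
  define l where "l = lam d n"
  have l1: "l \<ge> 1" using lam_ge1 n l_def by blast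
  have lp: "l > 0" using l1 by simp
  define \<delta> where "\<delta> = (l' / l - 1) * (\<bar>f 0\<bar> + L * (R + \<eta>)) + L * (\<eta> + R * (l' / l - 1))"
  define X where "X \<omega> = exp (l * f (scaleR (1/l) (S n \<omega>)))" for \<omega>
  define Y where "Y \<omega> = exp (l' * f (scaleR (1/l') (S n' \<omega>)))" for \<omega>
  have [measurable]: "X \<in> borel_measurable M" "Y \<in> borel_measurable M" unfolding X_def Y_def by measurable
  have XY: "X \<omega> * exp (- l * \<delta>) \<le> Y \<omega>" if "\<omega> \<in> G" for \<omega>
  proof -
    have "l' * f (scaleR (1/l') (S n' \<omega>)) \<ge> l * f (scaleR (1/l) (S n \<omega>)) - l * \<delta>"
      unfolding \<delta>_def
      by (rule rescale_det[OF lip lp]) (use l'1 GS[OF that] R \<eta> in \<open>auto simp: l_def\<close>)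
    then show ?thesis unfolding X_def Y_def by (simp add: exp_add[symmetric])
  qed
  have key': "ennreal (exp (- l * \<delta>) / 2) * (\<integral>\<^sup>+ \<omega>. ennreal (X \<omega>) \<partial>M) \<le> (\<integral>\<^sup>+ \<omega>. ennreal (Y \<omega>) \<partial>M)"
  proof (rule key[where \<beta> = \<beta> and \<gamma> = \<gamma>2 and C = "2*\<beta> + \<gamma>2 + 2"])
    show "ennreal (exp (- \<beta> * l)) \<le> \<integral>\<^sup>+ \<omega>. ennreal (X \<omega>) \<partial>M"
      using g n unfolding good_consts_def EV_def X_def l_def by (metis order_refl)
    show "(\<integral>\<^sup>+ \<omega>. ennreal ((X \<omega>)^2) \<partial>M) \<le> ennreal (exp (\<gamma>2 * l))"
      using g n unfolding good_consts_def EV_def X_def l_def by (metis order_refl)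
    show "measure M (space M - G) \<le> exp (- (2*\<beta> + \<gamma>2 + 2) * l)" using PG l_def by simp
  qed (use XY l1 in \<open>auto simp: X_def Y_def\<close>)
  have EX: "(\<integral>\<^sup>+ \<omega>. ennreal (X \<omega>) \<partial>M) = EV n l" unfolding X_def EV_def ..
  have EY: "(\<integral>\<^sup>+ \<omega>. ennreal (Y \<omega>) \<partial>M) = EV n' l'" unfolding Y_def EV_def ..
  define x where "x = enn2real (EV n l)"
  define y where "y = enn2real (EV n' l')"
  have xr: "EV n l = ennreal x" "x > 0" using EV_real[OF g n, of l] by (auto simp: x_def l_def)
  have yr: "EV n' l' = ennreal y" "y \<le> exp (\<gamma>1 * l')" "y \<ge> 0"
    using EV_real[OF g n' l'2] by (auto simp: y_def)
  have "ennreal (exp (- l * \<delta>) / 2 * x) \<le> ennreal y"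
    using key' unfolding EX EY xr(1) yr(1) using xr(2) by (subst ennreal_mult) auto
  then have xy: "exp (- l * \<delta>) / 2 * x \<le> y" using yr(3) by (simp add: ennreal_le_iff)
  have "ln y / l' \<ge> ln x / l - \<delta> - ln 2 / l - \<gamma>1 * (l'/l - 1)"
    by (rule loglem[OF xr(2) xy yr(2) lp]) (use lp l'1 g in \<open>auto simp: l_def good_consts_def field_simps\<close>)
  then show ?thesis unfolding x_def y_def \<delta>_def l_def .
qed

end


lemma real_le_lam: assumes "d \<ge> 1" shows "real n \<le> lam d n"
proof (cases "n = 0")
  case False
  then have "2*n \<le> (2*n)^d" using assms by (intro self_le_power) auto
  then have "n \<le> (2*n)^d" by linarith
  then show ?thesis unfolding lam_def by linarith
qed (simp add: lam_def)

lemma lam_at_top: assumes "d \<ge> 1" "filterlim b at_top sequentially"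
  shows "filterlim (\<lambda>j. lam d (b j)) at_top sequentially"
proof (rule filterlim_at_top_mono)
  show "filterlim (\<lambda>j. real (b j)) at_top sequentially"
    by (rule filterlim_compose[OF filterlim_real_sequentially assms(2)])
  show "\<forall>\<^sub>F x in sequentially. real (b x) \<le> lam d (b x)" using real_le_lam[OF assms(1)] by simp
qed

lemma inv_lam_tendsto: assumes "d \<ge> 1" "filterlim b at_top sequentially"
  shows "((\<lambda>j. c / lam d (b j)) \<longlongrightarrow> 0) sequentially"
  by (rule tendsto_divide_0[OF tendsto_const filterlim_at_top_imp_at_infinity[OF lam_at_top[OF assms]]])

lemma lam_ratio_tendsto:
  assumes ev: "eventually (\<lambda>j. b j \<le> a j \<and> a j \<le> b j + c) sequentially"
    and b: "filterlim b at_top sequentially"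
  shows "((\<lambda>j. lam d (a j) / lam d (b j)) \<longlongrightarrow> 1) sequentially"
proof -
  have rb: "filterlim (\<lambda>j. real (b j)) at_top sequentially"
    by (rule filterlim_compose[OF filterlim_real_sequentially b])
  have c0: "((\<lambda>j. real c / real (b j)) \<longlongrightarrow> 0) sequentially"
    by (rule tendsto_divide_0[OF tendsto_const filterlim_at_top_imp_at_infinity[OF rb]])
  have b1: "eventually (\<lambda>j. b j \<ge> 1) sequentially"
    using b unfolding filterlim_at_top by (rule allE[of _ 1])
  have q: "((\<lambda>j. real (a j) / real (b j)) \<longlongrightarrow> 1) sequentially"
  proof (rule tendsto_sandwich[of "\<lambda>_. 1" _ _ "\<lambda>j. 1 + real c / real (b j)"])
    show "\<forall>\<^sub>F n in sequentially. 1 \<le> real (a n) / real (b n)"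
      using ev b1 by eventually_elim auto
    show "\<forall>\<^sub>F n in sequentially. real (a n) / real (b n) \<le> 1 + real c / real (b n)"
      using ev b1
    proof eventually_elim
      case (elim n)
      then have bp: "real (b n) > 0" by simp
      have "real (a n) / real (b n) \<le> (real (b n) + real c) / real (b n)"
        using elim by (intro divide_right_mono) auto
      also have "\<dots> = 1 + real c / real (b n)" using bp by (simp add: add_divide_distrib)
      finally show ?case .
    qed
    show "((\<lambda>j. 1 + real c / real (b j)) \<longlongrightarrow> 1) sequentially"
      using tendsto_add[OF tendsto_const c0, of 1] by simp
  qed simp
  have "((\<lambda>j. (real (a j) / real (b j)) ^ d) \<longlongrightarrow> 1 ^ d) sequentially"
    by (rule tendsto_power[OF q])
  then have "((\<lambda>j. (real (a j) / real (b j)) ^ d) \<longlongrightarrow> 1) sequentially" by simp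
  moreover have ev: "eventually (\<lambda>j. (real (a j) / real (b j)) ^ d = lam d (a j) / lam d (b j)) sequentially"
    using b1 by eventually_elim (simp add: lam_def power_divide power_mult_distrib)
  ultimately show ?thesis using tendsto_cong[OF ev] by simp
qed



lemma lam_mono: "n \<le> m \<Longrightarrow> lam d n \<le> lam d m"
  unfolding lam_def by (simp add: power_mono)

context lipsetup begin

definition alpha where "alpha n = ln (enn2real (EV n (lam d n))) / lam d n"

lemma stepC:
  fixes r :: nat and \<epsilon> :: real
  assumes e: "\<epsilon> > 0"
  shows "\<exists>J. \<forall>j\<ge>J. ln (enn2real (EV j (lam d (j + r)))) / lam d (j + r) \<ge> alpha j - \<epsilon>"
proof -
  obtain \<beta> \<gamma>1 \<gamma>2 where g: "good_consts \<beta> \<gamma>1 \<gamma>2" using ex_good by blast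
  then have g0: "\<beta> \<ge> 0" "\<gamma>1 \<ge> 0" "\<gamma>2 \<ge> 0" unfolding good_consts_def by auto
  obtain B where tail: "\<And>n R. n\<ge>1 \<Longrightarrow> measure M {\<omega>\<in>space M. norm (S n \<omega>) > R * lam d n} \<le> exp ((B - R) * lam d n)"
    using tail_bound by blast
  define C where "C = 2*\<beta> + \<gamma>2 + 2"
  define R where "R = \<bar>B\<bar> + C"
  have R0: "R \<ge> 0" unfolding R_def C_def using g0 by simp
  define K0 where "K0 = \<bar>f 0\<bar> + 2 * L * R + \<gamma>1"
  have K0: "K0 \<ge> 0" unfolding K0_def using R0 L_nonneg g0 by simp
  define \<rho> where "\<rho> j = lam d (j + r) / lam d j" for j
  have \<rho>lim: "(\<rho> \<longlongrightarrow> 1) sequentially" unfolding \<rho>_def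
    by (rule lam_ratio_tendsto[where c = r]) (auto simp: filterlim_ident)
  have llim: "((\<lambda>j. ln 2 / lam d j) \<longlongrightarrow> 0) sequentially"
    using inv_lam_tendsto[OF d1 filterlim_ident] by simp
  have ev1: "eventually (\<lambda>j. dist (\<rho> j) 1 < \<epsilon> / (2 * (K0 + 1))) sequentially"
    by (rule tendstoD[OF \<rho>lim]) (use e K0 in simp)
  have ev2: "eventually (\<lambda>j. dist (ln 2 / lam d j) 0 < \<epsilon> / 2) sequentially"
    using tendstoD[OF llim, of "\<epsilon>/2"] e by simp
  have ev3: "eventually (\<lambda>j. j \<ge> 1) sequentially" by (rule eventually_ge_at_top)
  have "eventually (\<lambda>j. ln (enn2real (EV j (lam d (j + r)))) / lam d (j + r) \<ge> alpha j - \<epsilon>) sequentially"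
    using ev1 ev2 ev3
  proof eventually_elim
    case (elim j)
    have j: "j \<ge> 1" using elim by simp
    have l1: "lam d j \<ge> 1" using lam_ge1 j by blast
    define G where "G = {\<omega>\<in>space M. norm (S j \<omega>) \<le> R * lam d j}"
    have [measurable]: "G \<in> sets M" unfolding G_def by measurable
    have PG: "measure M (space M - G) \<le> exp (- (2*\<beta> + \<gamma>2 + 2) * lam d j)"
    proof -
      have "space M - G = {\<omega>\<in>space M. norm (S j \<omega>) > R * lam d j}" unfolding G_def by auto
      then have "measure M (space M - G) \<le> exp ((B - R) * lam d j)" using tail[OF j] by simp
      also have "\<dots> \<le> exp (- C * lam d j)" using l1 by (intro exp_mono mult_right_mono) (auto simp: R_def)
      finally show ?thesis unfolding C_def .
    qed
    have c: "ln (enn2real (EV j (lam d (j + r)))) / lam d (j + r) \<ge> ln (enn2real (EV j (lam d j))) / lam d j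
     - ((lam d (j + r) / lam d j - 1) * (\<bar>f 0\<bar> + L * (R + 0)) + L * (0 + R * (lam d (j + r) / lam d j - 1)))
     - ln 2 / lam d j - \<gamma>1 * (lam d (j + r) / lam d j - 1)"
      by (rule compare[where G=G and \<eta>=0, OF g j j _ _ _ _ R0]) (use PG in \<open>auto simp: G_def lam_mono\<close>)
    have r1: "\<bar>\<rho> j - 1\<bar> < \<epsilon> / (2 * (K0 + 1))" using elim by (simp add: dist_real_def)
    have "(\<rho> j - 1) * K0 \<le> \<bar>\<rho> j - 1\<bar> * K0" using K0 by (intro mult_right_mono) auto
    also have "\<dots> \<le> \<epsilon> / (2 * (K0 + 1)) * K0" using r1 K0 by (intro mult_right_mono) auto
    also have "\<dots> \<le> \<epsilon> / 2" using K0 e by (simp add: field_simps)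
    finally have a1: "(\<rho> j - 1) * K0 \<le> \<epsilon> / 2" .
    have a2: "ln 2 / lam d j < \<epsilon> / 2" using elim l1 by (simp add: dist_real_def)
    have "((lam d (j + r) / lam d j - 1) * (\<bar>f 0\<bar> + L * (R + 0)) + L * (0 + R * (lam d (j + r) / lam d j - 1)))
      + \<gamma>1 * (lam d (j + r) / lam d j - 1) = (\<rho> j - 1) * K0"
      unfolding \<rho>_def[symmetric] K0_def by (simp add: algebra_simps)
    then show ?case using c a1 a2 unfolding alpha_def by linarith
  qed
  then show ?thesis by (simp add: eventually_sequentially)
qed

end


lemma mm_bounds:
  fixes n k :: nat
  assumes k: "k \<ge> 1" and n: "n \<ge> k"
  shows "(2 * ((n div k - 1) div 2) + 1) * k \<le> n" "n < (2 * ((n div k - 1) div 2) + 3) * k"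
proof -
  define q where "q = n div k"
  have q1: "q \<ge> 1" using k n unfolding q_def by (simp add: div_le_mono[of k n k, simplified] Suc_le_eq div_greater_zero_iff)
  have dm: "n = q * k + n mod k" "n mod k < k" unfolding q_def using k by auto
  have qk: "q * k \<le> n" "n < (q + 1) * k" using dm by (linarith, simp)
  have a: "2 * ((q - 1) div 2) + 1 \<le> q" "q + 1 \<le> 2 * ((q - 1) div 2) + 3" using q1 by presburger+
  show "(2 * ((n div k - 1) div 2) + 1) * k \<le> n"
    using mult_le_mono1[OF a(1), of k] qk(1) unfolding q_def by linarith
  show "n < (2 * ((n div k - 1) div 2) + 3) * k"
    using mult_le_mono1[OF a(2), of k] qk(2) unfolding q_def by linarith
qed

context lipsetup begin

lemma stepB:
  assumes reg: "exp_regular M S d" and k: "k \<ge> 1" and e: "\<epsilon> > 0"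
  shows "\<exists>N. \<forall>n\<ge>N. alpha n \<ge> alpha ((2 * ((n div k - 1) div 2) + 1) * k) - \<epsilon>"
proof -
  define bN where "bN n = (2 * ((n div k - 1) div 2) + 1) * k" for n
  have bNb: "bN n \<le> n" "n < bN n + 2 * k" if "n \<ge> k" for n
    using mm_bounds[OF k that] unfolding bN_def by (auto simp: algebra_simps)
  have bN1: "bN n \<ge> 1" for n unfolding bN_def using k by simp
  have bNlim: "filterlim bN at_top sequentially"
    unfolding filterlim_at_top
  proof
    fix Z :: nat
    show "\<forall>\<^sub>F n in sequentially. Z \<le> bN n"
    proof (rule eventually_sequentiallyI[of "Z + 2*k"])
      fix n assume "Z + 2*k \<le> n"
      then show "Z \<le> bN n" using bNb[of n] by auto
    qed
  qed
  obtain \<beta> \<gamma>1 \<gamma>2 where g: "good_consts \<beta> \<gamma>1 \<gamma>2" using ex_good by blast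
  then have g0: "\<beta> \<ge> 0" "\<gamma>1 \<ge> 0" "\<gamma>2 \<ge> 0" unfolding good_consts_def by auto
  obtain B where tail: "\<And>n R. n\<ge>1 \<Longrightarrow> measure M {\<omega>\<in>space M. norm (S n \<omega>) > R * lam d n} \<le> exp ((B - R) * lam d n)"
    using tail_bound by blast
  define C where "C = 2*\<beta> + \<gamma>2 + 2"
  have C0: "C \<ge> 0" unfolding C_def using g0 by simp
  define R where "R = \<bar>B\<bar> + C + 1"
  have R0: "R \<ge> 0" unfolding R_def using C0 by simp
  define \<eta> where "\<eta> = \<epsilon> / (3 * (L + 1))"
  have \<eta>0: "\<eta> > 0" unfolding \<eta>_def using e L_nonneg by simp
  have L\<eta>: "L * \<eta> \<le> \<epsilon> / 3"
    unfolding \<eta>_def using e L_nonneg by (simp add: field_simps)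
  define K0 where "K0 = \<bar>f 0\<bar> + L * (R + \<eta>) + L * R + \<gamma>1"
  have K0: "K0 \<ge> 0" unfolding K0_def using R0 L_nonneg g0 \<eta>0 by simp
  have h1: "\<eta>/2 > 0" using \<eta>0 by simp
  have h2: "C + 1 > 0" using C0 by simp
  obtain N0 where N0: "\<forall>n\<ge>N0. \<forall>m::nat. (2*m+1)*k \<le> n \<and> n < (2*m+3)*k \<longrightarrow>
        measure M {\<omega>\<in>space M. norm (S n \<omega> - S ((2*m+1)*k) \<omega>) > (\<eta>/2) * lam d n}
          \<le> exp (- (C + 1) * lam d n)"
    using reg[unfolded exp_regular_def, rule_format, OF k h1 h2] by blast
  define \<rho> where "\<rho> n = lam d n / lam d (bN n)" for n
  have \<rho>lim: "(\<rho> \<longlongrightarrow> 1) sequentially" unfolding \<rho>_def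
  proof (rule lam_ratio_tendsto[where c = "2*k", OF _ bNlim])
    show "\<forall>\<^sub>F j in sequentially. bN j \<le> j \<and> j \<le> bN j + 2 * k"
      using eventually_ge_at_top[of k] by eventually_elim (use bNb in force)
  qed
  have llim: "((\<lambda>n. ln 2 / lam d (bN n)) \<longlongrightarrow> 0) sequentially"
    by (rule inv_lam_tendsto[OF d1 bNlim])
  have ev1: "eventually (\<lambda>j. dist (\<rho> j) 1 < min 1 (\<epsilon> / (3 * (K0 + 1)))) sequentially"
    by (rule tendstoD[OF \<rho>lim]) (use e K0 in simp)
  have ev2: "eventually (\<lambda>j. dist (ln 2 / lam d (bN j)) 0 < \<epsilon> / 3) sequentially"
    using tendstoD[OF llim, of "\<epsilon>/3"] e by simp
  have ev3: "eventually (\<lambda>j. j \<ge> max N0 k) sequentially" by (rule eventually_ge_at_top)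
  have "eventually (\<lambda>n. alpha n \<ge> alpha (bN n) - \<epsilon>) sequentially"
    using ev1 ev2 ev3
  proof eventually_elim
    case (elim n)
    have nk: "n \<ge> k" "n \<ge> N0" using elim by auto
    have n1: "n \<ge> 1" using nk k by simp
    define N where "N = bN n"
    have N1: "N \<ge> 1" unfolding N_def by (rule bN1)
    have Nn: "N \<le> n" using bNb[OF nk(1)] N_def by simp
    have lN1: "lam d N \<ge> 1" using lam_ge1 N1 by blast
    have lNn: "lam d N \<le> lam d n" using lam_mono Nn by blast
    have r1: "\<bar>\<rho> n - 1\<bar> < min 1 (\<epsilon> / (3 * (K0 + 1)))" using elim by (simp add: dist_real_def)
    have \<rho>2: "lam d n \<le> 2 * lam d N"
    proof -
      have "\<bar>\<rho> n - 1\<bar> < 1" using r1 by simp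
      then have "\<rho> n \<le> 2" by (simp add: abs_less_iff)
      then show ?thesis unfolding \<rho>_def N_def[symmetric] using lN1 by (simp add: divide_le_eq)
    qed
    define G where "G = {\<omega>\<in>space M. norm (S N \<omega>) \<le> R * lam d N \<and> norm (S n \<omega> - S N \<omega>) \<le> (\<eta>/2) * lam d n}"
    have [measurable]: "G \<in> sets M" unfolding G_def by measurable
    have GS: "norm (S N \<omega>) \<le> R * lam d N \<and> norm (S n \<omega> - S N \<omega>) \<le> \<eta> * lam d N" if "\<omega> \<in> G" for \<omega>
    proof -
      have "(\<eta>/2) * lam d n \<le> (\<eta>/2) * (2 * lam d N)" using \<rho>2 \<eta>0 by (intro mult_left_mono) auto
      then show ?thesis using that unfolding G_def by auto
    qed
    have PG: "measure M (space M - G) \<le> exp (- (2*\<beta> + \<gamma>2 + 2) * lam d N)"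
    proof -
      have sub: "space M - G \<subseteq> {\<omega>\<in>space M. norm (S N \<omega>) > R * lam d N} \<union> {\<omega>\<in>space M. norm (S n \<omega> - S N \<omega>) > (\<eta>/2) * lam d n}"
        unfolding G_def by auto
      have "measure M (space M - G) \<le> measure M ({\<omega>\<in>space M. norm (S N \<omega>) > R * lam d N} \<union> {\<omega>\<in>space M. norm (S n \<omega> - S N \<omega>) > (\<eta>/2) * lam d n})"
        by (rule finite_measure_mono[OF sub]) measurable
      also have "\<dots> \<le> measure M {\<omega>\<in>space M. norm (S N \<omega>) > R * lam d N} + measure M {\<omega>\<in>space M. norm (S n \<omega> - S N \<omega>) > (\<eta>/2) * lam d n}"
      proof (rule measure_subadditive)
        show "{\<omega>\<in>space M. norm (S N \<omega>) > R * lam d N} \<in> sets M" by measurable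
        show "{\<omega>\<in>space M. norm (S n \<omega> - S N \<omega>) > (\<eta>/2) * lam d n} \<in> sets M" by measurable
      qed (simp_all add: emeasure_eq_measure)
      also have "\<dots> \<le> exp ((B - R) * lam d N) + exp (- (C + 1) * lam d n)"
      proof (rule add_mono)
        show "measure M {\<omega>\<in>space M. norm (S N \<omega>) > R * lam d N} \<le> exp ((B - R) * lam d N)" by (rule tail[OF N1])
        have "(2 * ((n div k - 1) div 2) + 1) * k \<le> n \<and> n < (2 * ((n div k - 1) div 2) + 3) * k"
          using mm_bounds[OF k nk(1)] by simp
        then show "measure M {\<omega>\<in>space M. norm (S n \<omega> - S N \<omega>) > (\<eta>/2) * lam d n} \<le> exp (- (C + 1) * lam d n)"
          using N0 nk(2) unfolding N_def bN_def by blast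
      qed
      also have "\<dots> \<le> exp (- (C + 1) * lam d N) + exp (- (C + 1) * lam d N)"
      proof (rule add_mono)
        show "exp ((B - R) * lam d N) \<le> exp (- (C + 1) * lam d N)"
          using lN1 by (intro exp_mono mult_right_mono) (auto simp: R_def)
        show "exp (- (C + 1) * lam d n) \<le> exp (- (C + 1) * lam d N)"
          using lNn C0 by (intro exp_mono) (auto intro: mult_left_mono)
      qed
      also have "\<dots> = 2 * exp (- lam d N) * exp (- C * lam d N)"
        by (simp add: exp_add[symmetric] algebra_simps)
      also have "\<dots> \<le> 2 * (1/2) * exp (- C * lam d N)"
        using exp_half[OF lN1] by (intro mult_right_mono mult_left_mono) auto
      finally show ?thesis unfolding C_def by simp
    qed
    have c: "ln (enn2real (EV n (lam d n))) / lam d n \<ge> ln (enn2real (EV N (lam d N))) / lam d N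
     - ((lam d n / lam d N - 1) * (\<bar>f 0\<bar> + L * (R + \<eta>)) + L * (\<eta> + R * (lam d n / lam d N - 1)))
     - ln 2 / lam d N - \<gamma>1 * (lam d n / lam d N - 1)"
      by (rule compare[OF g N1 n1 lNn order_refl _ GS R0 _ PG]) (use \<eta>0 in auto)
    have "(\<rho> n - 1) * K0 \<le> \<bar>\<rho> n - 1\<bar> * K0" using K0 by (intro mult_right_mono) auto
    also have "\<dots> \<le> \<epsilon> / (3 * (K0 + 1)) * K0" using r1 K0 by (intro mult_right_mono) auto
    also have "\<dots> \<le> \<epsilon> / 3" using K0 e by (simp add: field_simps)
    finally have a1: "(\<rho> n - 1) * K0 \<le> \<epsilon> / 3" .
    have a2: "ln 2 / lam d N < \<epsilon> / 3" using elim lN1 by (simp add: dist_real_def N_def)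
    have "((lam d n / lam d N - 1) * (\<bar>f 0\<bar> + L * (R + \<eta>)) + L * (\<eta> + R * (lam d n / lam d N - 1)))
      + \<gamma>1 * (lam d n / lam d N - 1) = (\<rho> n - 1) * K0 + L * \<eta>"
      unfolding N_def \<rho>_def[symmetric] K0_def by (simp add: algebra_simps)
    then show ?case using c a1 a2 L\<eta> unfolding alpha_def N_def by linarith
  qed
  then show ?thesis unfolding bN_def by (simp add: eventually_sequentially)
qed

end


lemma box_pts_eq: "box_pts m = (Pi\<^sub>E UNIV (\<lambda>_. {- int m..int m}) :: ('d::finite \<Rightarrow> int) set)"
proof -
  have "\<bar>z i\<bar> \<le> int m \<longleftrightarrow> z i \<in> {- int m..int m}" for z :: "'d \<Rightarrow> int" and i by auto
  then show ?thesis unfolding box_pts_def PiE_UNIV_domain Pi_def by auto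
qed

lemma finite_box: "finite (box_pts m :: ('d::finite \<Rightarrow> int) set)"
  unfolding box_pts_eq by (intro finite_PiE) auto

lemma card_box: "card (box_pts m :: ('d::finite \<Rightarrow> int) set) = (2*m+1) ^ CARD('d)"
proof -
  have "card (box_pts m :: ('d::finite \<Rightarrow> int) set) = (\<Prod>i\<in>(UNIV::'d set). card {- int m..int m})"
    unfolding box_pts_eq by (rule card_PiE) simp
  also have "\<dots> = (2*m+1) ^ CARD('d)" by (simp add: nat_add_distrib nat_mult_distrib)
  finally show ?thesis .
qed

lemma lam_mult: "lam d ((2*m+1)*k) = real ((2*m+1)^d) * lam d k"
proof -
  have "2*((2*m+1)*k) = (2*m+1)*(2*k)" by simp
  then show ?thesis unfolding lam_def by (simp only: power_mult_distrib of_nat_mult)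
qed

context lipsetup begin

lemma distr_nn_eq:
  assumes [measurable]: "X \<in> borel_measurable M" "Y \<in> borel_measurable M" "g \<in> borel_measurable borel"
    and eq: "distr M borel X = distr M borel Y"
  shows "(\<integral>\<^sup>+ \<omega>. g (X \<omega>) \<partial>M) = (\<integral>\<^sup>+ \<omega>. g (Y \<omega>) \<partial>M)"
proof -
  have "(\<integral>\<^sup>+ \<omega>. g (X \<omega>) \<partial>M) = (\<integral>\<^sup>+ v. g v \<partial>distr M borel X)" by (subst nn_integral_distr) auto
  also have "\<dots> = (\<integral>\<^sup>+ v. g v \<partial>distr M borel Y)" unfolding eq ..
  also have "\<dots> = (\<integral>\<^sup>+ \<omega>. g (Y \<omega>) \<partial>M)" by (subst nn_integral_distr) auto
  finally show ?thesis .
qed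

lemma stepA:
  fixes S' :: "nat \<Rightarrow> ('d::finite \<Rightarrow> int) \<Rightarrow> 'a \<Rightarrow> 'v" and r :: nat
  assumes conc: "concave_on UNIV f"
    and indep: "\<forall>n. indep_vars (\<lambda>_. borel) (S' n) UNIV \<and> (\<forall>z. distr M borel (S' n z) = distr M borel (S n))"
    and nadd: "\<forall>\<epsilon>>0. \<forall>C>0. \<exists>K::nat. K > r \<and> (\<forall>k\<ge>K. \<forall>m\<ge>1.
           measure M {\<omega>\<in>space M.
              norm (S ((2*m+1)*k) \<omega> - (\<Sum>z\<in>box_pts m. S' (k - r) z \<omega>))
                > \<epsilon> * lam d ((2*m+1)*k)}
            \<le> exp (- C * lam d ((2*m+1)*k)))"
    and dcard: "d = CARD('d)"
    and e: "\<epsilon> > 0"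
  shows "\<exists>K. K > r \<and> (\<forall>k\<ge>K. \<forall>m\<ge>1. alpha ((2*m+1)*k) \<ge> ln (enn2real (EV (k - r) (lam d k))) / lam d k - \<epsilon>)"
proof -
  obtain \<beta> \<gamma>1 \<gamma>2 where g: "good_consts \<beta> \<gamma>1 \<gamma>2" using ex_good by blast
  then have g0: "\<beta> \<ge> 0" "\<gamma>1 \<ge> 0" "\<gamma>2 \<ge> 0" unfolding good_consts_def by auto
  define C where "C = 2*\<beta> + \<gamma>2 + 2"
  have C0: "C > 0" unfolding C_def using g0 by simp
  define e' where "e' = \<epsilon> / (2 * (L + 1))"
  have e'0: "e' > 0" unfolding e'_def using e L_nonneg by simp
  have Le': "L * e' \<le> \<epsilon> / 2" unfolding e'_def using e L_nonneg by (simp add: field_simps)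
  obtain K1 where K1: "K1 > r" and nK: "\<forall>k\<ge>K1. \<forall>m\<ge>1.
           measure M {\<omega>\<in>space M.
              norm (S ((2*m+1)*k) \<omega> - (\<Sum>z\<in>box_pts m. S' (k - r) z \<omega>))
                > e' * lam d ((2*m+1)*k)}
            \<le> exp (- C * lam d ((2*m+1)*k))"
    using nadd[rule_format, OF e'0 C0] by (elim exE conjE)
  have "eventually (\<lambda>k. dist (ln 2 / lam d k) 0 < \<epsilon> / 2) sequentially"
    using tendstoD[OF inv_lam_tendsto[OF d1 filterlim_ident, of "ln 2"], of "\<epsilon>/2"] e by simp
  then obtain K2 where K2: "\<And>k. k \<ge> K2 \<Longrightarrow> dist (ln 2 / lam d k) 0 < \<epsilon> / 2"
    unfolding eventually_sequentially by blast
  define K where "K = max K1 K2"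
  have "alpha ((2*m+1)*k) \<ge> ln (enn2real (EV (k - r) (lam d k))) / lam d k - \<epsilon>"
    if k: "k \<ge> K" and m: "m \<ge> 1" for k m
  proof -
    define j where "j = k - r"
    have j1: "j \<ge> 1" using k K1 unfolding K_def j_def by presburger
    have k1: "k \<ge> 1" using j1 unfolding j_def by simp
    have lk1: "lam d k \<ge> 1" using lam_ge1 k1 by blast
    have ljk: "lam d j \<le> lam d k" unfolding j_def by (rule lam_mono) simp
    define N where "N = (2*m+1)*k"
    define B where "B = (box_pts m :: ('d \<Rightarrow> int) set)"
    define p where "p = card B"
    have finB: "finite B" unfolding B_def by (rule finite_box)
    have pval: "p = (2*m+1)^d" unfolding p_def B_def dcard by (rule card_box)
    have p1: "p \<ge> 1" unfolding pval by simp
    have Bne: "B \<noteq> {}" using p1 finB unfolding p_def by auto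
    have lN: "lam d N = real p * lam d k" unfolding N_def pval by (rule lam_mult)
    have rp1: "real p \<ge> 1" using p1 by simp
    have "real p * lam d k \<ge> 1 * 1" using rp1 lk1 by (intro mult_mono) auto
    then have lN1: "lam d N \<ge> 1" unfolding lN by simp
    have lkN: "lam d k \<le> lam d N" unfolding N_def by (rule lam_mono) simp
    have meas_S'[measurable]: "S' j z \<in> borel_measurable M" for z
      using indep unfolding indep_vars_def by auto
    define h where "h v = exp (lam d k * f (scaleR (1 / lam d k) v))" for v
    have h_meas[measurable]: "h \<in> borel_measurable borel" unfolding h_def by measurable
    have hpos: "h v > 0" for v unfolding h_def by simp
    define X where "X \<omega> = (\<Prod>z\<in>B. h (S' j z \<omega>))" for \<omega>
    define Y where "Y \<omega> = exp (lam d N * f (scaleR (1 / lam d N) (S N \<omega>)))" for \<omega>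
    have [measurable]: "X \<in> borel_measurable M" "Y \<in> borel_measurable M" unfolding X_def Y_def by measurable
    define G where "G = {\<omega>\<in>space M. norm (S N \<omega> - (\<Sum>z\<in>B. S' j z \<omega>)) \<le> e' * lam d N}"
    have [measurable]: "G \<in> sets M" unfolding G_def by measurable
    have XY: "X \<omega> * exp (- lam d N * (L * e')) \<le> Y \<omega>" if "\<omega> \<in> G" for \<omega>
    proof -
      define T where "T = (\<Sum>z\<in>B. S' j z \<omega>)"
      have lNp: "lam d N > 0" using lN1 by simp
      have lkp: "lam d k > 0" using lk1 by simp
      have "f (scaleR (1 / lam d N) (S N \<omega>)) \<ge> f (scaleR (1 / lam d N) T) - L * norm (scaleR (1 / lam d N) (S N \<omega>) - scaleR (1 / lam d N) T)"
        by (rule lip_diff[OF lip])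
      moreover have nm: "norm (scaleR (1 / lam d N) (S N \<omega>) - scaleR (1 / lam d N) T) \<le> e'"
      proof -
        have "norm (scaleR (1 / lam d N) (S N \<omega>) - scaleR (1 / lam d N) T) = norm (S N \<omega> - T) / lam d N"
          using lNp by (simp add: scaleR_diff_right[symmetric])
        also have "\<dots> \<le> e'" using that lNp unfolding G_def T_def by (simp add: pos_divide_le_eq)
        finally show ?thesis .
      qed
      ultimately have f1: "f (scaleR (1 / lam d N) (S N \<omega>)) \<ge> f (scaleR (1 / lam d N) T) - L * e'"
        using mult_left_mono[OF nm L_nonneg] by linarith
      have jen: "f (\<Sum>z\<in>B. (1 / real p) *\<^sub>R (scaleR (1 / lam d k) (S' j z \<omega>))) \<ge> (\<Sum>z\<in>B. (1 / real p) * f (scaleR (1 / lam d k) (S' j z \<omega>)))"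
        by (rule concave_on_sum[OF finB Bne conc]) (use p1 in \<open>auto simp: p_def\<close>)
      have eqT: "scaleR (1 / lam d N) T = (\<Sum>z\<in>B. (1 / real p) *\<^sub>R (scaleR (1 / lam d k) (S' j z \<omega>)))"
        unfolding T_def lN by (simp add: scaleR_sum_right)
      have "lam d N * f (scaleR (1 / lam d N) T) \<ge> lam d N * (\<Sum>z\<in>B. (1 / real p) * f (scaleR (1 / lam d k) (S' j z \<omega>)))"
        using jen eqT lNp by (simp add: mult_left_mono)
      also have "lam d N * (\<Sum>z\<in>B. (1 / real p) * f (scaleR (1 / lam d k) (S' j z \<omega>))) = (\<Sum>z\<in>B. lam d k * f (scaleR (1 / lam d k) (S' j z \<omega>)))"
        unfolding lN sum_distrib_left using p1 by (intro sum.cong) auto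
      finally have f2: "lam d N * f (scaleR (1 / lam d N) T) \<ge> (\<Sum>z\<in>B. lam d k * f (scaleR (1 / lam d k) (S' j z \<omega>)))" .
      have "lam d N * f (scaleR (1 / lam d N) (S N \<omega>)) \<ge> lam d N * f (scaleR (1 / lam d N) T) - lam d N * (L * e')"
        using f1 lNp by (simp add: right_diff_distrib[symmetric] mult_left_mono)
      with f2 have f3: "lam d N * f (scaleR (1 / lam d N) (S N \<omega>)) \<ge> (\<Sum>z\<in>B. lam d k * f (scaleR (1 / lam d k) (S' j z \<omega>))) - lam d N * (L * e')"
        by linarith
      have "X \<omega> = exp (\<Sum>z\<in>B. lam d k * f (scaleR (1 / lam d k) (S' j z \<omega>)))"
        unfolding X_def h_def by (simp add: exp_sum[OF finB])
      then have "X \<omega> * exp (- lam d N * (L * e')) = exp ((\<Sum>z\<in>B. lam d k * f (scaleR (1 / lam d k) (S' j z \<omega>))) - lam d N * (L * e'))"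
        by (simp add: exp_diff exp_minus field_simps)
      also have "\<dots> \<le> Y \<omega>" unfolding Y_def using f3 by simp
      finally show ?thesis .
    qed
    have ind: "indep_vars (\<lambda>_. borel) (\<lambda>z \<omega>. ennreal (q (S' j z \<omega>))) B" if [measurable]: "q \<in> borel_measurable borel" for q :: "'v \<Rightarrow> real"
    proof -
      have "indep_vars (\<lambda>_. borel) (\<lambda>z \<omega>. ennreal (q (S' j z \<omega>))) UNIV"
        by (rule indep_vars_compose2[where M' = "\<lambda>_. borel"]) (use indep in auto)
      then show ?thesis by (rule indep_vars_subset) simp
    qed
    have EXq: "(\<integral>\<^sup>+ \<omega>. ennreal (\<Prod>z\<in>B. q (S' j z \<omega>)) \<partial>M) = (\<integral>\<^sup>+ \<omega>. ennreal (q (S j \<omega>)) \<partial>M) ^ p"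
      if [measurable]: "q \<in> borel_measurable borel" and qn: "\<And>v. q v \<ge> 0" for q :: "'v \<Rightarrow> real"
    proof -
      have "(\<integral>\<^sup>+ \<omega>. ennreal (\<Prod>z\<in>B. q (S' j z \<omega>)) \<partial>M) = (\<integral>\<^sup>+ \<omega>. (\<Prod>z\<in>B. ennreal (q (S' j z \<omega>))) \<partial>M)"
        using qn by (simp add: prod_ennreal)
      also have "\<dots> = (\<Prod>z\<in>B. \<integral>\<^sup>+ \<omega>. ennreal (q (S' j z \<omega>)) \<partial>M)"
        by (rule indep_vars_nn_integral[OF finB ind]) auto
      also have "\<dots> = (\<Prod>z\<in>B. \<integral>\<^sup>+ \<omega>. ennreal (q (S j \<omega>)) \<partial>M)"
      proof (rule prod.cong)
        fix z assume "z \<in> B"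
        show "(\<integral>\<^sup>+ \<omega>. ennreal (q (S' j z \<omega>)) \<partial>M) = (\<integral>\<^sup>+ \<omega>. ennreal (q (S j \<omega>)) \<partial>M)"
          by (rule distr_nn_eq[where g = "\<lambda>v. ennreal (q v)"]) (use indep in auto)
      qed simp
      also have "\<dots> = (\<integral>\<^sup>+ \<omega>. ennreal (q (S j \<omega>)) \<partial>M) ^ p" unfolding p_def by simp
      finally show ?thesis .
    qed
    have EV_j: "EV j (lam d k) = (\<integral>\<^sup>+ \<omega>. ennreal (h (S j \<omega>)) \<partial>M)" unfolding EV_def h_def ..
    have gc: "\<forall>n\<ge>1. \<forall>\<mu>\<ge>lam d n.
     EV n \<mu> \<ge> ennreal (exp (- \<beta> * \<mu>)) \<and> EV n \<mu> \<le> ennreal (exp (\<gamma>1 * \<mu>)) \<and>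
     (\<integral>\<^sup>+ \<omega>. ennreal ((exp (\<mu> * f (scaleR (1/\<mu>) (S n \<omega>))))^2) \<partial>M) \<le> ennreal (exp (\<gamma>2 * \<mu>))"
      using g unfolding good_consts_def by (elim conjE)
    note gcj = gc[rule_format, OF j1 ljk]
    have gj1: "EV j (lam d k) \<ge> ennreal (exp (- \<beta> * lam d k))"
      using gcj by (rule conjunct1)
    have gj2: "(\<integral>\<^sup>+ \<omega>. ennreal ((h (S j \<omega>))^2) \<partial>M) \<le> ennreal (exp (\<gamma>2 * lam d k))"
      unfolding h_def by (rule gcj[THEN conjunct2, THEN conjunct2])
    note gj = gj1 gj2
    have EX: "(\<integral>\<^sup>+ \<omega>. ennreal (X \<omega>) \<partial>M) = EV j (lam d k) ^ p"
      unfolding X_def EV_j by (rule EXq) (auto simp: less_imp_le[OF hpos])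
    have EX2: "(\<integral>\<^sup>+ \<omega>. ennreal ((X \<omega>)^2) \<partial>M) = (\<integral>\<^sup>+ \<omega>. ennreal ((h (S j \<omega>))^2) \<partial>M) ^ p"
      unfolding X_def prod_power_distrib by (rule EXq) auto
    have key': "ennreal (exp (- lam d N * (L * e')) / 2) * (\<integral>\<^sup>+ \<omega>. ennreal (X \<omega>) \<partial>M) \<le> (\<integral>\<^sup>+ \<omega>. ennreal (Y \<omega>) \<partial>M)"
    proof (rule key[where \<beta> = \<beta> and \<gamma> = \<gamma>2 and C = C])
      show "ennreal (exp (- \<beta> * lam d N)) \<le> \<integral>\<^sup>+ \<omega>. ennreal (X \<omega>) \<partial>M"
      proof -
        have "ennreal (exp (- \<beta> * lam d N)) = ennreal (exp (- \<beta> * lam d k)) ^ p"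
          unfolding lN by (simp add: ennreal_power exp_of_nat_mult[symmetric] mult_ac)
        also have "\<dots> \<le> EV j (lam d k) ^ p" by (intro power_mono gj(1)) auto
        finally show ?thesis unfolding EX .
      qed
      show "(\<integral>\<^sup>+ \<omega>. ennreal ((X \<omega>)^2) \<partial>M) \<le> ennreal (exp (\<gamma>2 * lam d N))"
      proof -
        have "(\<integral>\<^sup>+ \<omega>. ennreal ((X \<omega>)^2) \<partial>M) \<le> ennreal (exp (\<gamma>2 * lam d k)) ^ p"
          unfolding EX2 by (intro power_mono gj(2)) auto
        also have "\<dots> = ennreal (exp (\<gamma>2 * lam d N))"
          unfolding lN by (simp add: ennreal_power exp_of_nat_mult[symmetric] mult_ac)
        finally show ?thesis .
      qed
      show "measure M (space M - G) \<le> exp (- C * lam d N)"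
      proof -
        have "space M - G = {\<omega>\<in>space M. norm (S ((2*m+1)*k) \<omega> - (\<Sum>z\<in>box_pts m. S' (k - r) z \<omega>)) > e' * lam d ((2*m+1)*k)}"
          unfolding G_def N_def B_def j_def by auto
        moreover have "k \<ge> K1" using k unfolding K_def by simp
        ultimately show ?thesis using nK m unfolding N_def by simp
      qed
    qed (use XY lN1 in \<open>auto simp: X_def Y_def C_def less_imp_le[OF hpos] prod_nonneg\<close>)
    define x where "x = enn2real (EV j (lam d k))"
    define y where "y = enn2real (EV N (lam d N))"
    have xr: "EV j (lam d k) = ennreal x" "x > 0" using EV_real[OF g j1 ljk] by (auto simp: x_def)
    have N1: "N \<ge> 1" unfolding N_def using k1 by simp
    have yr: "EV N (lam d N) = ennreal y" "y > 0" using EV_real[OF g N1 order_refl] by (auto simp: y_def)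
    have EY: "(\<integral>\<^sup>+ \<omega>. ennreal (Y \<omega>) \<partial>M) = EV N (lam d N)" unfolding Y_def EV_def ..
    have "ennreal (exp (- lam d N * (L * e')) / 2 * x ^ p) \<le> ennreal y"
      using key' unfolding EX EY xr(1) yr(1) using xr(2)
      by (subst ennreal_mult) (auto simp: ennreal_power)
    then have xy: "exp (- lam d N * (L * e')) / 2 * x ^ p \<le> y" using yr(2) by (simp add: ennreal_le_iff)
    have "ln (exp (- lam d N * (L * e')) / 2 * x ^ p) = - lam d N * (L * e') - ln 2 + real p * ln x"
      using xr(2) by (simp add: ln_mult ln_div ln_realpow)
    moreover have "ln (exp (- lam d N * (L * e')) / 2 * x ^ p) \<le> ln y" using xy xr(2) yr(2) by simp
    ultimately have ly: "ln y \<ge> - lam d N * (L * e') - ln 2 + real p * ln x" by simp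
    have lkp: "lam d k > 0" using lk1 by simp
    have "ln y / lam d N \<ge> (- lam d N * (L * e') - ln 2 + real p * ln x) / lam d N"
      using ly lN1 by (simp add: divide_right_mono)
    also have "(- lam d N * (L * e') - ln 2 + real p * ln x) / lam d N = - (L * e') - ln 2 / lam d N + ln x / lam d k"
      using lN1 lkp p1 unfolding lN by (simp add: field_simps)
    finally have a: "ln y / lam d N \<ge> - (L * e') - ln 2 / lam d N + ln x / lam d k" .
    have "ln 2 / lam d N \<le> ln 2 / lam d k" using lkN lkp by (simp add: frac_le)
    moreover have "ln 2 / lam d k < \<epsilon> / 2" using K2[of k] k lkp unfolding K_def by (simp add: dist_real_def)
    ultimately show ?thesis using a Le' unfolding alpha_def x_def y_def N_def j_def by linarith
  qed
  moreover have "K > r" unfolding K_def using K1 by simp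
  ultimately show ?thesis by blast
qed

end


context lipsetup begin

lemma alpha_bounds:
  assumes g: "good_consts \<beta> \<gamma>1 \<gamma>2" and n: "n \<ge> 1"
  shows "alpha n \<le> \<gamma>1" "Gamma M d S n f / ereal (lam d n) = ereal (alpha n)"
proof -
  have l1: "lam d n \<ge> 1" using lam_ge1 n by blast
  note E = EV_real[OF g n order_refl]
  have "ln (enn2real (EV n (lam d n))) \<le> \<gamma>1 * lam d n"
    using E(3,4) by (metis exp_le_cancel_iff exp_ln)
  then show "alpha n \<le> \<gamma>1" unfolding alpha_def using l1 by (simp add: divide_le_eq)
  have "Gamma M d S n f = ereal (ln (enn2real (EV n (lam d n))))"
    unfolding Gamma_def EV_def[symmetric] lnEnn_def lnE_def using E(1,4)
    by (metis ennreal_neq_top linorder_not_le)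
  then show "Gamma M d S n f / ereal (lam d n) = ereal (alpha n)"
    unfolding alpha_def using l1 by simp
qed

lemma conv:
  assumes reg: "exp_regular M S d" and nadd: "exp_nearly_additive M S TYPE('d::finite)"
    and dcard: "d = CARD('d)" and conc: "concave_on UNIV f"
  shows "\<exists>G::ereal. G \<noteq> \<infinity> \<and> (\<lambda>n. Gamma M d S n f / ereal (lam d n)) \<longlonglongrightarrow> G"
proof -
  obtain r and S' :: "nat \<Rightarrow> ('d \<Rightarrow> int) \<Rightarrow> 'a \<Rightarrow> 'v" where
    indep: "\<forall>n. indep_vars (\<lambda>_. borel) (S' n) UNIV \<and> (\<forall>z. distr M borel (S' n z) = distr M borel (S n))"
    and na: "\<forall>\<epsilon>>0. \<forall>C>0. \<exists>K::nat. K > r \<and> (\<forall>k\<ge>K. \<forall>m\<ge>1.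
           measure M {\<omega>\<in>space M.
              norm (S ((2*m+1)*k) \<omega> - (\<Sum>z\<in>box_pts m. S' (k - r) z \<omega>))
                > \<epsilon> * lam CARD('d) ((2*m+1)*k)}
            \<le> exp (- C * lam CARD('d) ((2*m+1)*k)))"
    using nadd unfolding exp_nearly_additive_def by blast
  have na': "\<forall>\<epsilon>>0. \<forall>C>0. \<exists>K::nat. K > r \<and> (\<forall>k\<ge>K. \<forall>m\<ge>1.
           measure M {\<omega>\<in>space M.
              norm (S ((2*m+1)*k) \<omega> - (\<Sum>z\<in>box_pts m. S' (k - r) z \<omega>))
                > \<epsilon> * lam d ((2*m+1)*k)}
            \<le> exp (- C * lam d ((2*m+1)*k)))"
    using na unfolding dcard .
  have P: "\<exists>J. \<forall>j\<ge>J. \<exists>N. \<forall>n\<ge>N. alpha n \<ge> alpha j - \<epsilon>" if e: "\<epsilon> > 0" for \<epsilon>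
  proof -
    have e3: "\<epsilon>/3 > 0" using e by simp
    obtain KA where KA: "KA > r" and A: "\<forall>k\<ge>KA. \<forall>m\<ge>1. alpha ((2*m+1)*k) \<ge> ln (enn2real (EV (k - r) (lam d k))) / lam d k - \<epsilon>/3"
      using stepA[OF conc indep na' dcard e3] by (elim exE conjE)
    obtain JC where C: "\<forall>j\<ge>JC. ln (enn2real (EV j (lam d (j + r)))) / lam d (j + r) \<ge> alpha j - \<epsilon>/3"
      using stepC[OF e3, of r] by (elim exE)
    have "\<exists>N. \<forall>n\<ge>N. alpha n \<ge> alpha j - \<epsilon>" if j: "j \<ge> max KA JC" for j
    proof -
      define k where "k = j + r"
      have k1: "k \<ge> 1" "k \<ge> KA" using j KA unfolding k_def by auto
      obtain NB where B: "\<forall>n\<ge>NB. alpha n \<ge> alpha ((2 * ((n div k - 1) div 2) + 1) * k) - \<epsilon>/3"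
        using stepB[OF reg k1(1) e3] by (elim exE)
      have "alpha n \<ge> alpha j - \<epsilon>" if n: "n \<ge> max NB (3*k)" for n
      proof -
        define m where "m = (n div k - 1) div 2"
        have "(3*k) div k \<le> n div k" using n by (intro div_le_mono) simp
        moreover have "(3*k) div k = 3" using k1 by simp
        ultimately have "n div k \<ge> 3" by simp
        then have m1: "m \<ge> 1" unfolding m_def by simp
        have b: "alpha n \<ge> alpha ((2 * m + 1) * k) - \<epsilon>/3" using B n unfolding m_def by simp
        have a: "alpha ((2*m+1)*k) \<ge> ln (enn2real (EV (k - r) (lam d k))) / lam d k - \<epsilon>/3"
          using A k1(2) m1 by blast
        have c: "ln (enn2real (EV j (lam d (j + r)))) / lam d (j + r) \<ge> alpha j - \<epsilon>/3"
          using C j by simp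
        have "k - r = j" unfolding k_def by simp
        then show ?thesis using a b c unfolding k_def by simp
      qed
      then show ?thesis by blast
    qed
    then show ?thesis by blast
  qed
  obtain \<beta> \<gamma>1 \<gamma>2 where g: "good_consts \<beta> \<gamma>1 \<gamma>2" using ex_good by blast
  define a where "a n = Gamma M d S n f / ereal (lam d n)" for n
  have aeq: "eventually (\<lambda>n. a n = ereal (alpha n)) sequentially"
    using eventually_ge_at_top[of 1] by eventually_elim (simp add: a_def alpha_bounds(2)[OF g])
  have aup: "eventually (\<lambda>n. a n \<le> ereal \<gamma>1) sequentially"
    using eventually_ge_at_top[of 1] by eventually_elim (simp add: a_def alpha_bounds[OF g])
  have ls: "limsup a \<le> liminf a + ereal \<epsilon>" if e: "\<epsilon> > 0" for \<epsilon> :: real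
  proof -
    obtain J where J: "\<And>j. j \<ge> J \<Longrightarrow> \<exists>N. \<forall>n\<ge>N. alpha n \<ge> alpha j - \<epsilon>" using P[OF e] by blast
    have "eventually (\<lambda>j. a j \<le> liminf a + ereal \<epsilon>) sequentially"
      using eventually_ge_at_top[of J] aeq
    proof eventually_elim
      case (elim j)
      obtain N where N: "\<forall>n\<ge>N. alpha n \<ge> alpha j - \<epsilon>" using J elim(1) by blast
      have "eventually (\<lambda>n. ereal (alpha j - \<epsilon>) \<le> a n) sequentially"
        using eventually_ge_at_top[of N] aeq by eventually_elim (use N in simp)
      then have "ereal (alpha j - \<epsilon>) \<le> liminf a" by (rule Liminf_bounded)
      then have "ereal (alpha j) \<le> liminf a + ereal \<epsilon>"
        by (cases "liminf a") auto
      then show ?case using elim(2) by simp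
    qed
    then show ?thesis by (rule Limsup_bounded)
  qed
  have le: "limsup a \<le> liminf a" by (rule ereal_le_epsilon2) (use ls in auto)
  have ge: "liminf a \<le> limsup a" by (rule Liminf_le_Limsup) simp
  have lim: "a \<longlonglongrightarrow> liminf a"
    by (rule Liminf_eq_Limsup) (use le ge in auto)
  have "limsup a \<le> ereal \<gamma>1" using aup by (rule Limsup_bounded)
  then have "liminf a \<noteq> \<infinity>" using ge by auto
  with lim show ?thesis unfolding a_def by blast
qed

end

theorem mainTheorem7:
  fixes M :: "'a measure" and S :: "nat \<Rightarrow> 'a \<Rightarrow> 'v::euclidean_space"
  assumes "prob_space M"
    and "\<And>n. S n \<in> borel_measurable M"
    and "exp_regular M S CARD('d::finite)"
    and "exp_nearly_additive M S TYPE('d)"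
    and "\<And>l. \<exists>B::real. \<forall>n\<ge>1.
            lnEnn (\<integral>\<^sup>+ \<omega>. ennreal (exp (l \<bullet> S n \<omega>)) \<partial>M) / ereal (lam CARD('d) n) \<le> ereal B"
  shows "exp_tight M S CARD('d)
    \<and> (\<forall>f :: 'v \<Rightarrow> real. (\<exists>L. L-lipschitz_on UNIV f) \<and> concave_on UNIV f \<longrightarrow>
         (\<exists>G::ereal. G \<noteq> \<infinity> \<and>
            (\<lambda>n. Gamma M CARD('d) S n f / ereal (lam CARD('d) n)) \<longlonglongrightarrow> G))"
proof -
  interpret E: expmom M S "CARD('d)"
  proof (rule expmom.intro)
    show "prob_space M" by fact
    show "expmom_axioms M S CARD('d)" by (rule expmom_axioms.intro) (use assms in auto)
  qed
  have "(\<exists>G::ereal. G \<noteq> \<infinity> \<and> (\<lambda>n. Gamma M CARD('d) S n f / ereal (lam CARD('d) n)) \<longlonglongrightarrow> G)"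
    if lf: "\<exists>L. L-lipschitz_on UNIV f" and cf: "concave_on UNIV f" for f :: "'v \<Rightarrow> real"
  proof -
    obtain L where L: "L-lipschitz_on UNIV f" using lf by blast
    interpret F: lipsetup M S "CARD('d)" f L
    proof (rule lipsetup.intro)
      show "expmom M S CARD('d)" by (rule E.expmom_axioms)
      show "lipsetup_axioms CARD('d) f L" by (rule lipsetup_axioms.intro) (use L in auto)
    qed
    show ?thesis by (rule F.conv[OF assms(3) assms(4) refl cf])
  qed
  then show ?thesis using E.tight by blast
qed


end
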